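(* (a) For any tree $T$ of order at least two with $\sigma(T)$ leaves, $O_{\rm SR}(T)=\mathcal{M}$ if $\sigma(T)=2$, $O_{\rm SR}(T)=\mathcal{N}$ if $\sigma(T)=3$, and $O_{\rm SR}(T)=\mathcal{B}$ if $\sigma(T)\ge 4$. (b) For $n\ge 3$, $O_{\rm SR}(C_n)=\mathcal{M}$ if $n$ is even, $O_{\rm SR}(C_3)=\mathcal{N}$, and $O_{\rm SR}(C_n)=\mathcal{B}$ if $n\ge 5$ is odd. (c) For the Petersen graph $\mathcal{P}$, $O_{\rm SR}(\mathcal{P})=\mathcal{B}$. (d) For $m\ge 2$, let $G=K_{a_1,\ldots,a_m}$ be a complete $m$-partite graph of order $n=\sum_{i=1}^m a_i\ge 3$, and let $s$ be the number of partite sets of $G$ consisting of exactly one element. Then $O_{\rm SR}(G)=\mathcal{B}$ if $s\ge 4$, or $a_i\ge 4$ for some $i\in[m]$, or $s=a_i=3$ for some $i\in[m]$, or $a_i=a_j=3$ for distinct $i,j\in[m]$; $O_{\rm SR}(G)=\mathcal{N}$ if $s=3$ and $a_i\le 2$ for each $i\in[m]$, or if $s\le 2$, $a_i=3$ for exactly one $i\in[m]$ and $a_j\le 2$ for each $j\in[m]\setminus\{i\}$; and $O_{\rm SR}(G)=\mathcal{M}$ if $\max\{s,a_i\}\le 2$ for each $i\in[m]$.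
   Context: All graphs are finite, simple and undirected. $C_n$ is the cycle on $n$ vertices; $[m]=\{1,\dots,m\}$. A set $S\subseteq V(G)$ is a strong resolving set of a connected graph $G$ if for all distinct $x,y\in V(G)$ there exists $z\in S$ such that $x$ lies on a $y$–$z$ geodesic or $y$ lies on an $x$–$z$ geodesic. The Maker–Breaker strong resolving game on $G$: Maker and Breaker alternately select a not-yet-chosen vertex of $G$; Maker wins if the vertices he selects contain a strong resolving set of $G$, Breaker wins otherwise. In the M-game Maker moves first, in the B-game Breaker moves first. $O_{\rm SR}(G)=\mathcal{M}$ if Maker has a winning strategy in both games, $\mathcal{B}$ if Breaker has a winning strategy in both, and $\mathcal{N}$ if the first player has a winning strategy in each. *)

theory Defs
  imports Main
begin

definition simple_graph :: "'a set \<Rightarrow> ('a \<Rightarrow> 'a \<Rightarrow> bool) \<Rightarrow> bool" where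
  "simple_graph V E \<longleftrightarrow> finite V \<and> (\<forall>x y. E x y \<longrightarrow> x \<in> V \<and> y \<in> V)
     \<and> (\<forall>x y. E x y \<longrightarrow> E y x) \<and> (\<forall>x. \<not> E x x)"

text \<open>A walk is a nonempty list of vertices, consecutive ones adjacent.
  Its length (number of edges) is the list length minus one.\<close>
definition walk :: "'a set \<Rightarrow> ('a \<Rightarrow> 'a \<Rightarrow> bool) \<Rightarrow> 'a list \<Rightarrow> bool" where
  "walk V E xs \<longleftrightarrow> xs \<noteq> [] \<and> set xs \<subseteq> V \<and> (\<forall>i. Suc i < length xs \<longrightarrow> E (xs ! i) (xs ! Suc i))"

definition walk_between :: "'a set \<Rightarrow> ('a \<Rightarrow> 'a \<Rightarrow> bool) \<Rightarrow> 'a \<Rightarrow> 'a \<Rightarrow> 'a list \<Rightarrow> bool" where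
  "walk_between V E x y xs \<longleftrightarrow> walk V E xs \<and> hd xs = x \<and> last xs = y"

definition connected_graph :: "'a set \<Rightarrow> ('a \<Rightarrow> 'a \<Rightarrow> bool) \<Rightarrow> bool" where
  "connected_graph V E \<longleftrightarrow> V \<noteq> {} \<and> (\<forall>x\<in>V. \<forall>y\<in>V. \<exists>xs. walk_between V E x y xs)"

definition gdist :: "'a set \<Rightarrow> ('a \<Rightarrow> 'a \<Rightarrow> bool) \<Rightarrow> 'a \<Rightarrow> 'a \<Rightarrow> nat" where
  "gdist V E x y = (LEAST n. \<exists>xs. walk_between V E x y xs \<and> length xs = Suc n)"

definition geodesic :: "'a set \<Rightarrow> ('a \<Rightarrow> 'a \<Rightarrow> bool) \<Rightarrow> 'a \<Rightarrow> 'a \<Rightarrow> 'a list \<Rightarrow> bool" where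
  "geodesic V E y z xs \<longleftrightarrow> walk_between V E y z xs \<and> length xs = Suc (gdist V E y z)"

definition on_geodesic :: "'a set \<Rightarrow> ('a \<Rightarrow> 'a \<Rightarrow> bool) \<Rightarrow> 'a \<Rightarrow> 'a \<Rightarrow> 'a \<Rightarrow> bool" where
  "on_geodesic V E x y z \<longleftrightarrow> (\<exists>xs. geodesic V E y z xs \<and> x \<in> set xs)"

definition strong_resolving_set :: "'a set \<Rightarrow> ('a \<Rightarrow> 'a \<Rightarrow> bool) \<Rightarrow> 'a set \<Rightarrow> bool" where
  "strong_resolving_set V E S \<longleftrightarrow> S \<subseteq> V \<and>
     (\<forall>x\<in>V. \<forall>y\<in>V. x \<noteq> y \<longrightarrow> (\<exists>z\<in>S. on_geodesic V E x y z \<or> on_geodesic V E y x z))"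

text \<open>Position: Maker's set M, Breaker's set B; the boolean says whether it is
  Maker's turn.  The game ends when all of V is taken; Maker wins iff W M holds.
  maker_wins = Maker has a winning strategy from the position;
  breaker_wins = Breaker has a winning strategy from the position.\<close>
inductive maker_wins :: "'a set \<Rightarrow> ('a set \<Rightarrow> bool) \<Rightarrow> 'a set \<Rightarrow> 'a set \<Rightarrow> bool \<Rightarrow> bool"
  for V :: "'a set" and W :: "'a set \<Rightarrow> bool" where
  mw_end: "V - (M \<union> B) = {} \<Longrightarrow> W M \<Longrightarrow> maker_wins V W M B t"
| mw_maker: "v \<in> V - (M \<union> B) \<Longrightarrow> maker_wins V W (insert v M) B False \<Longrightarrow> maker_wins V W M B True"
| mw_breaker: "V - (M \<union> B) \<noteq> {} \<Longrightarrow> (\<forall>v\<in>V - (M \<union> B). maker_wins V W M (insert v B) True)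
     \<Longrightarrow> maker_wins V W M B False"

inductive breaker_wins :: "'a set \<Rightarrow> ('a set \<Rightarrow> bool) \<Rightarrow> 'a set \<Rightarrow> 'a set \<Rightarrow> bool \<Rightarrow> bool"
  for V :: "'a set" and W :: "'a set \<Rightarrow> bool" where
  bw_end: "V - (M \<union> B) = {} \<Longrightarrow> \<not> W M \<Longrightarrow> breaker_wins V W M B t"
| bw_breaker: "v \<in> V - (M \<union> B) \<Longrightarrow> breaker_wins V W M (insert v B) True \<Longrightarrow> breaker_wins V W M B False"
| bw_maker: "V - (M \<union> B) \<noteq> {} \<Longrightarrow> (\<forall>v\<in>V - (M \<union> B). breaker_wins V W (insert v M) B False)
     \<Longrightarrow> breaker_wins V W M B True"

definition SR_win :: "'a set \<Rightarrow> ('a \<Rightarrow> 'a \<Rightarrow> bool) \<Rightarrow> 'a set \<Rightarrow> bool" where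
  "SR_win V E M \<longleftrightarrow> (\<exists>S. S \<subseteq> M \<and> strong_resolving_set V E S)"

text \<open>M-game: Maker starts (turn = True); B-game: Breaker starts (turn = False).\<close>
definition maker_wins_M_game where "maker_wins_M_game V E = maker_wins V (SR_win V E) {} {} True"
definition maker_wins_B_game where "maker_wins_B_game V E = maker_wins V (SR_win V E) {} {} False"
definition breaker_wins_M_game where "breaker_wins_M_game V E = breaker_wins V (SR_win V E) {} {} True"
definition breaker_wins_B_game where "breaker_wins_B_game V E = breaker_wins V (SR_win V E) {} {} False"

datatype outcome = Out_M | Out_N | Out_B

definition O_SR_is :: "'a set \<Rightarrow> ('a \<Rightarrow> 'a \<Rightarrow> bool) \<Rightarrow> outcome \<Rightarrow> bool" where
  "O_SR_is V E out \<longleftrightarrow> (case out of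
      Out_M \<Rightarrow> maker_wins_M_game V E \<and> maker_wins_B_game V E
    | Out_B \<Rightarrow> breaker_wins_M_game V E \<and> breaker_wins_B_game V E
    | Out_N \<Rightarrow> maker_wins_M_game V E \<and> breaker_wins_B_game V E)"

definition has_cycle :: "'a set \<Rightarrow> ('a \<Rightarrow> 'a \<Rightarrow> bool) \<Rightarrow> bool" where
  "has_cycle V E \<longleftrightarrow> (\<exists>xs. walk V E xs \<and> distinct xs \<and> length xs \<ge> 3 \<and> E (last xs) (hd xs))"

definition is_tree :: "'a set \<Rightarrow> ('a \<Rightarrow> 'a \<Rightarrow> bool) \<Rightarrow> bool" where
  "is_tree V E \<longleftrightarrow> simple_graph V E \<and> connected_graph V E \<and> \<not> has_cycle V E"

definition degree :: "'a set \<Rightarrow> ('a \<Rightarrow> 'a \<Rightarrow> bool) \<Rightarrow> 'a \<Rightarrow> nat" where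
  "degree V E v = card {u \<in> V. E v u}"

definition num_leaves :: "'a set \<Rightarrow> ('a \<Rightarrow> 'a \<Rightarrow> bool) \<Rightarrow> nat" where
  "num_leaves V E = card {v \<in> V. degree V E v = 1}"

definition cycle_V :: "nat \<Rightarrow> nat set" where "cycle_V n = {0..<n}"
definition cycle_E :: "nat \<Rightarrow> nat \<Rightarrow> nat \<Rightarrow> bool" where
  "cycle_E n i j \<longleftrightarrow> i < n \<and> j < n \<and> (j = Suc i mod n \<or> i = Suc j mod n)"

text \<open>The Petersen graph as the Kneser graph K(5,2).\<close>
definition petersen_V :: "nat set set" where
  "petersen_V = {S. S \<subseteq> {0..<5} \<and> card S = 2}"
definition petersen_E :: "nat set \<Rightarrow> nat set \<Rightarrow> bool" where
  "petersen_E S T \<longleftrightarrow> S \<in> petersen_V \<and> T \<in> petersen_V \<and> S \<inter> T = {}"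

text \<open>Complete m-partite graph K_{a_1,...,a_m}: vertex (i,k) is the k-th vertex of part i.\<close>
definition multipartite_V :: "nat \<Rightarrow> (nat \<Rightarrow> nat) \<Rightarrow> (nat \<times> nat) set" where
  "multipartite_V m a = {(i, k). i \<in> {1..m} \<and> k < a i}"
definition multipartite_E :: "nat \<Rightarrow> (nat \<Rightarrow> nat) \<Rightarrow> nat \<times> nat \<Rightarrow> nat \<times> nat \<Rightarrow> bool" where
  "multipartite_E m a u v \<longleftrightarrow> u \<in> multipartite_V m a \<and> v \<in> multipartite_V m a \<and> fst u \<noteq> fst v"

end

theory Submission
  imports Defs
begin


lemma walk_iff: "walk V E xs \<longleftrightarrow> xs \<noteq> [] \<and> set xs \<subseteq> V \<and> successively E xs"
  unfolding walk_def successively_conv_nth by blast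

lemma succ_appendD1: "successively P (xs @ ys) \<Longrightarrow> successively P xs"
  by (simp add: successively_append_iff)
lemma succ_appendD2: "successively P (xs @ ys) \<Longrightarrow> successively P ys"
  by (simp add: successively_append_iff)

lemma walk_single: "x \<in> V \<Longrightarrow> walk_between V E x x [x]"
  by (simp add: walk_between_def walk_iff)

lemma walk_rev:
  assumes "simple_graph V E" "walk_between V E x y xs"
  shows "walk_between V E y x (rev xs)"
proof -
  have "successively (\<lambda>a b. E b a) xs" using assms
    by (auto simp: walk_between_def walk_iff simple_graph_def intro: successively_mono)
  then show ?thesis using assms by (auto simp: walk_between_def walk_iff hd_rev last_rev)
qed

lemma exists_walk:
  assumes "connected_graph V E" "x \<in> V" "y \<in> V"
  shows "\<exists>xs. walk_between V E x y xs"
  using assms unfolding connected_graph_def by blast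

lemma gdist_geodesic:
  assumes "connected_graph V E" "x \<in> V" "y \<in> V"
  shows "\<exists>xs. geodesic V E x y xs"
proof -
  obtain xs where xs: "walk_between V E x y xs" using exists_walk[OF assms] by blast
  then have ne: "xs \<noteq> []" by (simp add: walk_between_def walk_iff)
  then have "\<exists>n xs. walk_between V E x y xs \<and> length xs = Suc n"
    using xs by (intro exI[of _ "length xs - 1"] exI[of _ xs]) auto
  then have "\<exists>xs. walk_between V E x y xs \<and> length xs = Suc (gdist V E x y)"
    unfolding gdist_def by (rule LeastI_ex)
  then show ?thesis by (simp add: geodesic_def)
qed

lemma gdist_le:
  assumes "walk_between V E x y xs"
  shows "gdist V E x y \<le> length xs - 1"
proof -
  have ne: "xs \<noteq> []" using assms by (simp add: walk_between_def walk_iff)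
  then have "walk_between V E x y xs \<and> length xs = Suc (length xs - 1)" using assms by (cases xs) auto
  then show ?thesis unfolding gdist_def by (intro Least_le) blast
qed

lemma walk_between_in:
  "walk_between V E x y xs \<Longrightarrow> x \<in> V \<and> y \<in> V"
  unfolding walk_between_def walk_iff
  by (metis empty_iff hd_in_set last_in_set list.set(1) subset_iff)

lemma gdist_self: "x \<in> V \<Longrightarrow> gdist V E x x = 0"
  using gdist_le[OF walk_single[of x V E]] by simp

lemma gdist_0:
  assumes "connected_graph V E" "x \<in> V" "y \<in> V" "gdist V E x y = 0"
  shows "x = y"
proof -
  obtain xs where "geodesic V E x y xs" using gdist_geodesic[OF assms(1-3)] by blast
  then have "walk_between V E x y xs" "length xs = 1" using assms(4) by (auto simp: geodesic_def)
  then show ?thesis by (cases xs) (auto simp: walk_between_def)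
qed

lemma gdist_pos:
  assumes "connected_graph V E" "x \<in> V" "y \<in> V" "x \<noteq> y"
  shows "gdist V E x y \<ge> 1"
  using gdist_0[OF assms(1-3)] assms(4) by fastforce

lemma gdist_adj:
  assumes "E x y" "x \<in> V" "y \<in> V"
  shows "gdist V E x y \<le> 1"
proof -
  have "walk_between V E x y [x,y]" using assms by (simp add: walk_between_def walk_iff)
  from gdist_le[OF this] show ?thesis by simp
qed

lemma gdist_le1:
  assumes "connected_graph V E" "x \<in> V" "y \<in> V" "gdist V E x y \<le> 1"
  shows "x = y \<or> E x y"
proof -
  obtain xs where g: "geodesic V E x y xs" using gdist_geodesic[OF assms(1-3)] by blast
  then have w: "walk_between V E x y xs" and l: "length xs \<le> 2" using assms(4) by (auto simp: geodesic_def)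
  show ?thesis
  proof (cases "length xs = 1")
    case True then show ?thesis using w by (cases xs) (auto simp: walk_between_def)
  next
    case False
    moreover have "length xs \<noteq> 0" using w by (auto simp: walk_between_def walk_iff)
    ultimately have "length xs = 2" using l by linarith
    then obtain a b where "xs = [a,b]" by (cases xs; cases "tl xs") auto
    then show ?thesis using w by (auto simp: walk_between_def walk_iff)
  qed
qed

lemma gdist_sym:
  assumes "simple_graph V E" "connected_graph V E" "x \<in> V" "y \<in> V"
  shows "gdist V E x y = gdist V E y x"
proof -
  have "gdist V E y x \<le> gdist V E x y" if xy: "x \<in> V" "y \<in> V" for x y
  proof -
    obtain xs where g: "geodesic V E x y xs" using gdist_geodesic[OF assms(2) xy(1) xy(2)] by blast
    then have "walk_between V E y x (rev xs)" using walk_rev[OF assms(1)] by (auto simp: geodesic_def)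
    from gdist_le[OF this] show ?thesis using g by (simp add: geodesic_def)
  qed
  then show ?thesis using assms by (meson antisym)
qed

lemma walk_take:
  assumes "walk V E xs" "i < length xs"
  shows "walk_between V E (hd xs) (xs ! i) (take (Suc i) xs)"
proof -
  have t: "take (Suc i) xs = take i xs @ [xs ! i]" using assms(2) by (simp add: take_Suc_conv_app_nth)
  have "successively E (take (Suc i) xs @ drop (Suc i) xs)" using assms(1) by (simp add: walk_iff)
  then have "successively E (take (Suc i) xs)" by (rule succ_appendD1)
  moreover have "hd (take (Suc i) xs) = hd xs" using assms by (cases xs) auto
  moreover have "set (take (Suc i) xs) \<subseteq> V" using assms(1) by (meson order_trans set_take_subset walk_iff)
  ultimately show ?thesis unfolding walk_between_def walk_iff using t by simp
qed

lemma walk_drop: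
  assumes "walk V E xs" "i < length xs"
  shows "walk_between V E (xs ! i) (last xs) (drop i xs)"
  using assms unfolding walk_between_def walk_def
  by (auto simp: hd_drop_conv_nth dest: in_set_dropD)

lemma geodesic_split:
  assumes "geodesic V E y z xs" "x \<in> set xs"
  shows "gdist V E y x + gdist V E x z \<le> gdist V E y z"
proof -
  obtain i where i: "i < length xs" "xs ! i = x" using assms(2) by (metis in_set_conv_nth)
  have w: "walk V E xs" "hd xs = y" "last xs = z" using assms(1) by (auto simp: geodesic_def walk_between_def)
  have "gdist V E y x \<le> i" using gdist_le[OF walk_take[OF w(1) i(1)]] i w by simp
  moreover have "gdist V E x z \<le> length xs - 1 - i" using gdist_le[OF walk_drop[OF w(1) i(1)]] i w by simp
  moreover have "length xs = Suc (gdist V E y z)" using assms(1) by (simp add: geodesic_def)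
  ultimately show ?thesis using i by linarith
qed

lemma geodesic_distinct:
  assumes "geodesic V E y z xs"
  shows "distinct xs"
proof (rule ccontr)
  assume "\<not> distinct xs"
  then obtain a w b c where xs: "xs = a @ [w] @ b @ [w] @ c" using not_distinct_decomp by blast
  have wb: "walk_between V E y z xs" and len: "length xs = Suc (gdist V E y z)"
    using assms by (auto simp: geodesic_def)
  have s: "successively E ((a @ [w]) @ (b @ [w]) @ c)" using wb unfolding xs walk_between_def walk_iff by simp
  have s1: "successively E (a @ [w])" using succ_appendD1[OF s] .
  have "successively E (b @ ([w] @ c))" using succ_appendD2[OF s] by simp
  then have s2: "successively E ([w] @ c)" by (rule succ_appendD2)
  have "successively E ((a @ [w]) @ c)"
    using s1 s2 unfolding successively_append_iff by (cases c) auto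
  moreover have "hd (a @ [w] @ c) = y" "last (a @ [w] @ c) = z"
    using wb unfolding xs walk_between_def by (cases a; simp; cases c; simp)+
  ultimately have "walk_between V E y z (a @ [w] @ c)"
    using wb unfolding xs walk_between_def walk_iff by auto
  from gdist_le[OF this] len xs show False by simp
qed

lemma on_geodesic_last:
  assumes "connected_graph V E" "x \<in> V" "y \<in> V"
  shows "on_geodesic V E y x y"
proof -
  obtain xs where "geodesic V E x y xs" using gdist_geodesic[OF assms] by blast
  then show ?thesis unfolding on_geodesic_def
    by (metis geodesic_def walk_between_def walk_iff last_in_set)
qed

lemma SR_intro:
  assumes "connected_graph V E" "S \<subseteq> V"
    and "\<And>x y. x \<in> V \<Longrightarrow> y \<in> V \<Longrightarrow> x \<noteq> y \<Longrightarrow> x \<notin> S \<Longrightarrow> y \<notin> S \<Longrightarrow>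
            (\<exists>z\<in>S. on_geodesic V E x y z \<or> on_geodesic V E y x z)"
  shows "strong_resolving_set V E S"
  unfolding strong_resolving_set_def
proof (intro conjI assms(2) ballI impI)
  fix x y assume xy: "x \<in> V" "y \<in> V" "x \<noteq> y"
  show "\<exists>z\<in>S. on_geodesic V E x y z \<or> on_geodesic V E y x z"
  proof (cases "x \<in> S")
    case True then show ?thesis using on_geodesic_last[OF assms(1) xy(2) xy(1)] by blast
  next
    case False
    show ?thesis
    proof (cases "y \<in> S")
      case True then show ?thesis using on_geodesic_last[OF assms(1) xy(1) xy(2)] by blast
    qed (use assms(3) xy False in blast)
  qed
qed

lemma SR_cofinite1:
  assumes "connected_graph V E" "S \<subseteq> V" "\<And>x y. x \<in> V - S \<Longrightarrow> y \<in> V - S \<Longrightarrow> x = y"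
  shows "strong_resolving_set V E S"
  using assms by (intro SR_intro) auto

lemma MMD_not_SR:
  assumes c: "connected_graph V E" and xy: "x \<in> V" "y \<in> V" "x \<noteq> y"
    and mm: "\<And>z. z \<in> V \<Longrightarrow> gdist V E y z \<le> gdist V E y x \<and> gdist V E x z \<le> gdist V E x y"
    and S: "x \<notin> S" "y \<notin> S"
  shows "\<not> strong_resolving_set V E S"
proof
  assume sr: "strong_resolving_set V E S"
  then obtain z where z: "z \<in> S" "on_geodesic V E x y z \<or> on_geodesic V E y x z"
    using xy unfolding strong_resolving_set_def by blast
  have zV: "z \<in> V" using sr z(1) by (auto simp: strong_resolving_set_def)
  have zx: "z \<noteq> x" "z \<noteq> y" using z(1) S by auto
  from z(2) show False
  proof
    assume "on_geodesic V E x y z"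
    then obtain xs where "geodesic V E y z xs" "x \<in> set xs" unfolding on_geodesic_def by blast
    from geodesic_split[OF this] have "gdist V E y x + gdist V E x z \<le> gdist V E y z" .
    moreover have "gdist V E x z \<ge> 1" using gdist_pos[OF c xy(1) zV] zx by simp
    ultimately show False using mm[OF zV] by linarith
  next
    assume "on_geodesic V E y x z"
    then obtain xs where "geodesic V E x z xs" "y \<in> set xs" unfolding on_geodesic_def by blast
    from geodesic_split[OF this] have "gdist V E x y + gdist V E y z \<le> gdist V E x z" .
    moreover have "gdist V E y z \<ge> 1" using gdist_pos[OF c xy(2) zV] zx by simp
    ultimately show False using mm[OF zV] by linarith
  qed
qed

lemma leaf_not_interior:
  assumes sg: "simple_graph V E" and deg: "degree V E x = 1"
    and og: "on_geodesic V E x y z" and ne: "x \<noteq> y" "x \<noteq> z"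
  shows False
proof -
  obtain xs where g: "geodesic V E y z xs" "x \<in> set xs" using og unfolding on_geodesic_def by blast
  have d: "distinct xs" using geodesic_distinct[OF g(1)] .
  have w: "walk V E xs" "hd xs = y" "last xs = z" using g(1) by (auto simp: geodesic_def walk_between_def)
  obtain i where i: "i < length xs" "xs ! i = x" using g(2) by (metis in_set_conv_nth)
  have i0: "i \<noteq> 0" using i w ne by (metis hd_conv_nth walk_def)
  have il: "Suc i < length xs" using i w ne
    by (metis Suc_lessI diff_Suc_1 last_conv_nth walk_def)
  have e1: "E (xs ! (i - 1)) x" using w(1) i i0 unfolding walk_def by (metis Suc_pred' bot_nat_0.not_eq_extremum i(1) less_imp_diff_less)
  have e2: "E x (xs ! Suc i)" using w(1) il i unfolding walk_def by blast
  have e1': "E x (xs ! (i - 1))" using e1 sg by (simp add: simple_graph_def)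
  have neq: "xs ! (i - 1) \<noteq> xs ! Suc i" using d il i0 by (simp add: nth_eq_iff_index_eq)
  have sub: "{xs ! (i - 1), xs ! Suc i} \<subseteq> {u \<in> V. E x u}" using e1' e2 sg by (auto simp: simple_graph_def)
  have fin: "finite {u \<in> V. E x u}" using sg by (simp add: simple_graph_def)
  have "card {xs ! (i - 1), xs ! Suc i} \<le> card {u \<in> V. E x u}" using card_mono[OF fin sub] .
  then show False using neq deg by (simp add: degree_def)
qed

lemma leaves_not_SR:
  assumes sg: "simple_graph V E" and xy: "x \<noteq> y" "degree V E x = 1" "degree V E y = 1"
    and S: "x \<notin> S" "y \<notin> S" and xV: "x \<in> V" "y \<in> V"
  shows "\<not> strong_resolving_set V E S"
proof
  assume sr: "strong_resolving_set V E S"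
  then obtain z where z: "z \<in> S" "on_geodesic V E x y z \<or> on_geodesic V E y x z"
    using xy xV unfolding strong_resolving_set_def by blast
  then show False using leaf_not_interior[OF sg] xy S by (metis)
qed


definition bad :: "'a set \<Rightarrow> ('a set \<Rightarrow> bool) \<Rightarrow> 'a \<Rightarrow> 'a \<Rightarrow> bool" where
  "bad V W x y \<longleftrightarrow> (\<forall>M'. M' \<subseteq> V \<longrightarrow> x \<notin> M' \<longrightarrow> y \<notin> M' \<longrightarrow> \<not> W M')"

lemma bad_sym: "bad V W x y \<Longrightarrow> bad V W y x"
  unfolding bad_def by blast

lemma BW0:
  assumes "finite V" "M \<inter> B = {}" "M \<union> B \<subseteq> V" "x \<in> B" "y \<in> B" "bad V W x y"
  shows "breaker_wins V W M B t"
  using assms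
proof (induction "card (V - (M \<union> B))" arbitrary: M B t rule: less_induct)
  case (less M B t)
  show ?case
  proof (cases "V - (M \<union> B) = {}")
    case True
    have "\<not> W M" using less.prems unfolding bad_def by blast
    then show ?thesis by (rule bw_end[OF True])
  next
    case False
    have fin: "finite (V - (M \<union> B))" using less.prems by simp
    show ?thesis
    proof (cases t)
      case True
      have "breaker_wins V W (insert v M) B False" if v: "v \<in> V - (M \<union> B)" for v
      proof (rule less.hyps)
        have "V - (insert v M \<union> B) = (V - (M \<union> B)) - {v}" by blast
        then show "card (V - (insert v M \<union> B)) < card (V - (M \<union> B))"
          using card_Diff1_less[OF fin v] by simp
      qed (use less.prems v in auto)
      then have "breaker_wins V W M B True" using False by (intro bw_maker) auto
      then show ?thesis using True by simp
    next
      case f: False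
      obtain v where v: "v \<in> V - (M \<union> B)" using False by blast
      have "breaker_wins V W M (insert v B) True"
      proof (rule less.hyps)
        have "V - (M \<union> insert v B) = (V - (M \<union> B)) - {v}" by blast
        then show "card (V - (M \<union> insert v B)) < card (V - (M \<union> B))"
          using card_Diff1_less[OF fin v] by simp
      qed (use less.prems v in auto)
      then have "breaker_wins V W M B False" using v by (intro bw_breaker[of v]) auto
      then show ?thesis using f by simp
    qed
  qed
qed

lemma BT:
  assumes fin: "finite V" and MB: "M \<inter> B = {}" "M \<union> B \<subseteq> V"
    and xyz: "x \<in> V - (M \<union> B)" "y \<in> V - (M \<union> B)" "z \<in> V - (M \<union> B)" "x \<noteq> y" "x \<noteq> z" "y \<noteq> z"
    and b: "bad V W x y" "bad V W x z"
  shows "breaker_wins V W M B False"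
proof -
  have "breaker_wins V W M (insert x B) True"
  proof (rule bw_maker)
    show "V - (M \<union> insert x B) \<noteq> {}" using xyz by blast
    show "\<forall>v\<in>V - (M \<union> insert x B). breaker_wins V W (insert v M) (insert x B) False"
    proof
      fix v assume v: "v \<in> V - (M \<union> insert x B)"
      show "breaker_wins V W (insert v M) (insert x B) False"
      proof (cases "v = y")
        case False
        have "breaker_wins V W (insert v M) (insert y (insert x B)) True"
          by (rule BW0[OF fin _ _ _ _ b(1)]) (use MB xyz v False in auto)
        then show ?thesis using xyz v False by (intro bw_breaker[of y]) auto
      next
        case True
        have "breaker_wins V W (insert v M) (insert z (insert x B)) True"
          by (rule BW0[OF fin _ _ _ _ b(2)]) (use MB xyz v True in auto)
        then show ?thesis using xyz v True by (intro bw_breaker[of z]) auto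
      qed
    qed
  qed
  then show ?thesis using xyz by (intro bw_breaker[of x]) auto
qed

lemma BM:
  assumes fin: "finite V" and MB: "M \<inter> B = {}" "M \<union> B \<subseteq> V" "V - (M \<union> B) \<noteq> {}"
    and strat: "\<And>v. v \<in> V - (M \<union> B) \<Longrightarrow> \<exists>x y z. x \<in> V - (M \<union> B) - {v} \<and> y \<in> V - (M \<union> B) - {v}
          \<and> z \<in> V - (M \<union> B) - {v} \<and> x \<noteq> y \<and> x \<noteq> z \<and> y \<noteq> z \<and> bad V W x y \<and> bad V W x z"
  shows "breaker_wins V W M B True"
proof (rule bw_maker[OF MB(3)], rule ballI)
  fix v assume v: "v \<in> V - (M \<union> B)"
  obtain x y z where xyz: "x \<in> V - (M \<union> B) - {v}" "y \<in> V - (M \<union> B) - {v}"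
          "z \<in> V - (M \<union> B) - {v}" "x \<noteq> y" "x \<noteq> z" "y \<noteq> z" "bad V W x y" "bad V W x z"
    using strat[OF v] by blast
  show "breaker_wins V W (insert v M) B False"
    by (rule BT[OF fin _ _ _ _ _ _ _ _ xyz(7,8)]) (use MB v xyz in auto)
qed

definition badclique :: "'a set \<Rightarrow> ('a set \<Rightarrow> bool) \<Rightarrow> 'a set \<Rightarrow> bool" where
  "badclique V W C \<longleftrightarrow> (\<forall>x\<in>C. \<forall>y\<in>C. x \<noteq> y \<longrightarrow> bad V W x y)"

lemma three_elems:
  assumes "card C \<ge> 3"
  shows "\<exists>x y z. x \<in> C \<and> y \<in> C \<and> z \<in> C \<and> x \<noteq> y \<and> x \<noteq> z \<and> y \<noteq> z"
proof -
  from assms obtain a A where "C = insert a A" "a \<notin> A" "2 \<le> card A"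
    using card_le_Suc_iff[of 2 C] by auto
  moreover from this obtain b B where "A = insert b B" "b \<notin> B" "1 \<le> card B"
    using card_le_Suc_iff[of 1 A] by auto
  moreover from this obtain c D where "B = insert c D" "c \<notin> D"
    using card_le_Suc_iff[of 0 B] by auto
  ultimately show ?thesis by blast
qed

lemma GN:
  assumes fin: "finite V" and C: "C \<subseteq> V" "card C \<ge> 3" "badclique V W C"
  shows "breaker_wins V W {} {} False"
proof -
  obtain x y z where xyz: "x \<in> C" "y \<in> C" "z \<in> C" "x \<noteq> y" "x \<noteq> z" "y \<noteq> z"
    using three_elems[OF C(2)] by blast
  show ?thesis
    by (rule BT[OF fin, of _ _ x y z]) (use C xyz in \<open>auto simp: badclique_def\<close>)
qed

lemma GB4:
  assumes fin: "finite V" and C: "C \<subseteq> V" "card C \<ge> 4" "badclique V W C"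
  shows "breaker_wins V W {} {} True"
proof (rule BM[OF fin])
  show "V - ({} \<union> {}) \<noteq> {}" using C by auto
  fix v assume v: "v \<in> V - ({} \<union> {})"
  have "card (C - {v}) \<ge> 3" using C(2) by (auto simp: card_Diff_singleton_if)
  then obtain x y z where xyz: "x \<in> C - {v}" "y \<in> C - {v}" "z \<in> C - {v}" "x \<noteq> y" "x \<noteq> z" "y \<noteq> z"
    using three_elems by blast
  then show "\<exists>x y z. x \<in> V - ({} \<union> {}) - {v} \<and> y \<in> V - ({} \<union> {}) - {v}
          \<and> z \<in> V - ({} \<union> {}) - {v} \<and> x \<noteq> y \<and> x \<noteq> z \<and> y \<noteq> z \<and> bad V W x y \<and> bad V W x z"
    using C by (intro exI[of _ x] exI[of _ y] exI[of _ z]) (auto simp: badclique_def)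
qed auto

lemma GB33:
  assumes fin: "finite V" and C: "C \<subseteq> V" "card C \<ge> 3" "badclique V W C"
    and D: "D \<subseteq> V" "card D \<ge> 3" "badclique V W D" and CD: "C \<inter> D = {}"
  shows "breaker_wins V W {} {} True"
proof (rule BM[OF fin])
  show "V - ({} \<union> {}) \<noteq> {}" using C by auto
  fix v assume v: "v \<in> V - ({} \<union> {})"
  obtain K where K: "K = C \<or> K = D" "v \<notin> K" using CD by blast
  then have "card K \<ge> 3" "badclique V W K" "K \<subseteq> V" using C D by auto
  then obtain x y z where xyz: "x \<in> K" "y \<in> K" "z \<in> K" "x \<noteq> y" "x \<noteq> z" "y \<noteq> z"
    using three_elems by blast
  then show "\<exists>x y z. x \<in> V - ({} \<union> {}) - {v} \<and> y \<in> V - ({} \<union> {}) - {v}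
          \<and> z \<in> V - ({} \<union> {}) - {v} \<and> x \<noteq> y \<and> x \<noteq> z \<and> y \<noteq> z \<and> bad V W x y \<and> bad V W x z"
    using \<open>badclique V W K\<close> \<open>K \<subseteq> V\<close> K(2)
    by (intro exI[of _ x] exI[of _ y] exI[of _ z]) (auto simp: badclique_def)
qed auto

text \<open>Pairing strategy for Maker.\<close>

definition pairfam :: "'a set \<Rightarrow> 'a set set \<Rightarrow> bool" where
  "pairfam V P \<longleftrightarrow> (\<forall>p\<in>P. (\<exists>a b. a \<noteq> b \<and> p = {a, b}) \<and> p \<subseteq> V) \<and>
     (\<forall>p\<in>P. \<forall>q\<in>P. p \<noteq> q \<longrightarrow> p \<inter> q = {})"

lemma pairfam_D0: "pairfam V P \<Longrightarrow> p \<in> P \<Longrightarrow> (\<exists>a b. a \<noteq> b \<and> p = {a, b}) \<and> p \<subseteq> V"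
  unfolding pairfam_def by (erule conjE, erule bspec, assumption)
lemma pairfam_D: "pairfam V P \<Longrightarrow> p \<in> P \<Longrightarrow> \<exists>a b. a \<noteq> b \<and> p = {a, b} \<and> p \<subseteq> V"
  using pairfam_D0 by fast
lemma pairfam_D2: "pairfam V P \<Longrightarrow> p \<in> P \<Longrightarrow> q \<in> P \<Longrightarrow> p \<noteq> q \<Longrightarrow> p \<inter> q = {}"
  unfolding pairfam_def by blast

lemma MP:
  assumes fin: "finite V" and P: "pairfam V P"
    and win: "\<And>M'. M0 \<subseteq> M' \<Longrightarrow> M' \<subseteq> V \<Longrightarrow> (\<forall>p\<in>P. p \<inter> M' \<noteq> {}) \<Longrightarrow> W M'"
    and inv: "M0 \<subseteq> M" "M \<inter> B = {}" "M \<union> B \<subseteq> V"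
    and invt: "if t then (\<exists>b. \<forall>p\<in>P. p \<inter> M \<noteq> {} \<or> p \<inter> (B - {b}) = {})
               else (\<forall>p\<in>P. p \<inter> M \<noteq> {} \<or> p \<inter> B = {})"
  shows "maker_wins V W M B t"
  using inv invt
proof (induction "card (V - (M \<union> B))" arbitrary: M B t rule: less_induct)
  case (less M B t)
  have finF: "finite (V - (M \<union> B))" using fin by simp
  show ?case
  proof (cases "V - (M \<union> B) = {}")
    case True
    have "W M"
    proof (rule win)
      show "M0 \<subseteq> M" "M \<subseteq> V" using less.prems by auto
      show "\<forall>p\<in>P. p \<inter> M \<noteq> {}"
      proof
        fix p assume p: "p \<in> P"
        obtain a b where ab: "a \<noteq> b" "p = {a, b}" "p \<subseteq> V" using pairfam_D[OF P p(1)] by blast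
        show "p \<inter> M \<noteq> {}"
        proof
          assume pm: "p \<inter> M = {}"
          then have pB: "p \<subseteq> B" using True ab by blast
          show False
          proof (cases t)
            case True
            then obtain c where "\<forall>p\<in>P. p \<inter> M \<noteq> {} \<or> p \<inter> (B - {c}) = {}" using less.prems by auto
            then have "p \<inter> (B - {c}) = {}" using p pm by blast
            moreover have "a \<in> B - {c} \<or> b \<in> B - {c}" using ab pB by auto
            ultimately show False using ab by auto
          next
            case False
            then have "p \<inter> B = {}" using less.prems p pm by auto
            then show False using pB ab by blast
          qed
        qed
      qed
    qed
    then show ?thesis by (rule mw_end[OF True])
  next
    case False
    show ?thesis
    proof (cases t)
      case f: False
      have "maker_wins V W M (insert v B) True" if v: "v \<in> V - (M \<union> B)" for v
      proof (rule less.hyps)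
        have "V - (M \<union> insert v B) = (V - (M \<union> B)) - {v}" by blast
        then show "card (V - (M \<union> insert v B)) < card (V - (M \<union> B))"
          using card_Diff1_less[OF finF v] by simp
        show "if True then \<exists>b. \<forall>p\<in>P. p \<inter> M \<noteq> {} \<or> p \<inter> (insert v B - {b}) = {}
              else \<forall>p\<in>P. p \<inter> M \<noteq> {} \<or> p \<inter> insert v B = {}"
          using less.prems f by (simp, intro exI[of _ v]) blast
      qed (use less.prems v in auto)
      then have "maker_wins V W M B False" using False by (intro mw_breaker) auto
      then show ?thesis using f by simp
    next
      case t: True
      then obtain b where b: "\<forall>p\<in>P. p \<inter> M \<noteq> {} \<or> p \<inter> (B - {b}) = {}" using less.prems by auto
      show ?thesis
      proof (cases "\<exists>p\<in>P. b \<in> p \<and> p \<inter> M = {}")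
        case True
        then obtain p where p: "p \<in> P" "b \<in> p" "p \<inter> M = {}" by blast
        obtain a c where ac: "a \<noteq> c" "p = {a, c}" "p \<subseteq> V" using pairfam_D[OF P p(1)] by blast
        obtain w where w: "p = {b, w}" "w \<noteq> b" using ac p(2) by blast
        have wB: "w \<notin> B" using b p w by blast
        have wF: "w \<in> V - (M \<union> B)" using wB p w ac by blast
        have H: "\<forall>q\<in>P. q \<inter> insert w M \<noteq> {} \<or> q \<inter> B = {}"
        proof
          fix q assume q: "q \<in> P"
          show "q \<inter> insert w M \<noteq> {} \<or> q \<inter> B = {}"
          proof (cases "q = p")
            case True then show ?thesis using w by auto
          next
            case False
            then have "q \<inter> p = {}" using pairfam_D2[OF P q p(1)] by blast
            then have "b \<notin> q" using p by blast
            then show ?thesis using b q by blast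
          qed
        qed
        have "maker_wins V W (insert w M) B False"
        proof (rule less.hyps)
          have "V - (insert w M \<union> B) = (V - (M \<union> B)) - {w}" by blast
          then show "card (V - (insert w M \<union> B)) < card (V - (M \<union> B))"
            using card_Diff1_less[OF finF wF] by simp
        qed (use less.prems wF H in auto)
        then have "maker_wins V W M B True" using wF by (intro mw_maker[of w]) auto
        then show ?thesis using t by simp
      next
        case nb: False
        obtain v where v: "v \<in> V - (M \<union> B)" using False by blast
        have "maker_wins V W (insert v M) B False"
        proof (rule less.hyps)
          have "V - (insert v M \<union> B) = (V - (M \<union> B)) - {v}" by blast
          then show "card (V - (insert v M \<union> B)) < card (V - (M \<union> B))"
            using card_Diff1_less[OF finF v] by simp
          show "if False then \<exists>b. \<forall>p\<in>P. p \<inter> insert v M \<noteq> {} \<or> p \<inter> (B - {b}) = {}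
              else \<forall>p\<in>P. p \<inter> insert v M \<noteq> {} \<or> p \<inter> B = {}"
            using b nb by auto
        qed (use less.prems v in auto)
        then have "maker_wins V W M B True" using v by (intro mw_maker[of v]) auto
        then show ?thesis using t by simp
      qed
    qed
  qed
qed

lemma MP_B:
  assumes fin: "finite V" and P: "pairfam V P"
    and win: "\<And>M'. M' \<subseteq> V \<Longrightarrow> (\<forall>p\<in>P. p \<inter> M' \<noteq> {}) \<Longrightarrow> W M'"
  shows "maker_wins V W {} {} False"
  by (rule MP[OF fin P, of "{}"]) (use win in auto)

lemma MP_M:
  assumes fin: "finite V" and P: "pairfam V P"
    and win: "\<And>M'. M' \<subseteq> V \<Longrightarrow> (\<forall>p\<in>P. p \<inter> M' \<noteq> {}) \<Longrightarrow> W M'"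
  shows "maker_wins V W {} {} True"
proof -
  have "V \<noteq> {} \<or> V = {}" by blast
  then show ?thesis
  proof
    assume "V \<noteq> {}"
    then obtain v where v: "v \<in> V" by blast
    have "maker_wins V W {v} {} False"
      by (rule MP[OF fin P, of "{}"]) (use win v in auto)
    then show ?thesis using v by (intro mw_maker[of v]) auto
  next
    assume "V = {}"
    then have "P = {}" using P unfolding pairfam_def by blast
    then show ?thesis using win \<open>V = {}\<close> by (intro mw_end) auto
  qed
qed

lemma MP_first:
  assumes fin: "finite V" and P: "pairfam V P" and e: "e \<in> V"
    and win: "\<And>M'. e \<in> M' \<Longrightarrow> M' \<subseteq> V \<Longrightarrow> (\<forall>p\<in>P. p \<inter> M' \<noteq> {}) \<Longrightarrow> W M'"
  shows "maker_wins V W {} {} True"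
proof -
  have "maker_wins V W {e} {} False"
    by (rule MP[OF fin P, of "{e}"]) (use win e in auto)
  then show ?thesis using e by (intro mw_maker[of e]) auto
qed


definition groupwin :: "'a set \<Rightarrow> 'a set set \<Rightarrow> ('a set \<Rightarrow> bool) \<Rightarrow> bool" where
  "groupwin V Gs W \<longleftrightarrow> (\<forall>M'. M' \<subseteq> V \<longrightarrow> (\<forall>g\<in>Gs. \<forall>x\<in>g. \<forall>y\<in>g. x \<notin> M' \<longrightarrow> y \<notin> M' \<longrightarrow> x = y) \<longrightarrow> W M')"

definition groupfam :: "'a set \<Rightarrow> 'a set set \<Rightarrow> bool" where
  "groupfam V Gs \<longleftrightarrow> (\<forall>g\<in>Gs. g \<subseteq> V) \<and> (\<forall>g\<in>Gs. \<forall>h\<in>Gs. g \<noteq> h \<longrightarrow> g \<inter> h = {})"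

lemma card2_pair: "card g = 2 \<Longrightarrow> \<exists>a b. a \<noteq> b \<and> g = {a, b}"
  by (metis card_2_iff)

lemma Gr_M:
  assumes fin: "finite V" and G: "groupfam V Gs" and W: "groupwin V Gs W"
    and c: "\<forall>g\<in>Gs. card g \<le> 2"
  shows "maker_wins V W {} {} True" "maker_wins V W {} {} False"
proof -
  define P where "P = {g\<in>Gs. card g = 2}"
  have d: "\<forall>g\<in>Gs. \<forall>h\<in>Gs. g \<noteq> h \<longrightarrow> g \<inter> h = {}" "\<forall>g\<in>Gs. g \<subseteq> V" using G by (simp_all add: groupfam_def)
  have P: "pairfam V P"
    unfolding pairfam_def
  proof (intro conjI ballI impI)
    fix p assume p: "p \<in> P"
    then show "\<exists>a b. a \<noteq> b \<and> p = {a, b}" using card2_pair unfolding P_def by auto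
    show "p \<subseteq> V" using p d unfolding P_def by auto
  next
    fix p q assume "p \<in> P" "q \<in> P" "p \<noteq> q"
    then show "p \<inter> q = {}" using d unfolding P_def by auto
  qed
  have win: "W M'" if M': "M' \<subseteq> V" "\<forall>p\<in>P. p \<inter> M' \<noteq> {}" for M'
  proof -
    have "\<forall>g\<in>Gs. \<forall>x\<in>g. \<forall>y\<in>g. x \<notin> M' \<longrightarrow> y \<notin> M' \<longrightarrow> x = y"
    proof (intro ballI impI)
      fix g x y assume g: "g \<in> Gs" "x \<in> g" "y \<in> g" "x \<notin> M'" "y \<notin> M'"
      show "x = y"
      proof (rule ccontr)
        assume xy: "x \<noteq> y"
        have fg: "finite g" using G g fin unfolding groupfam_def by (meson finite_subset)
        have "card {x, y} \<le> card g" using g fg by (intro card_mono) auto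
        then have "card g = 2" using xy c g by auto
        then have "g \<in> P" using g by (simp add: P_def)
        moreover have "g = {x, y}" using \<open>card g = 2\<close> g xy card_subset_eq[OF fg, of "{x,y}"] by auto
        ultimately show False using M' g by auto
      qed
    qed
    then show ?thesis using W M' unfolding groupwin_def by blast
  qed
  show "maker_wins V W {} {} True" by (rule MP_M[OF fin P win])
  show "maker_wins V W {} {} False" by (rule MP_B[OF fin P win])
qed

lemma Gr_N:
  assumes fin: "finite V" and G: "groupfam V Gs" and W: "groupwin V Gs W"
    and g0: "g0 \<in> Gs" "card g0 = 3" and c: "\<forall>g\<in>Gs. g \<noteq> g0 \<longrightarrow> card g \<le> 2"
  shows "maker_wins V W {} {} True"
proof -
  obtain e where e: "e \<in> g0" using g0 by fastforce
  have eV: "e \<in> V" using e g0 G unfolding groupfam_def by blast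
  define P where "P = {g\<in>Gs. card g = 2 \<and> g \<noteq> g0} \<union> {g0 - {e}}"
  have c0: "card (g0 - {e}) = 2" using g0 e by simp
  have P: "pairfam V P"
    unfolding pairfam_def
  proof (intro conjI ballI impI)
    fix p assume "p \<in> P"
    then show "\<exists>a b. a \<noteq> b \<and> p = {a, b}" using c0 card2_pair unfolding P_def by auto
    show "p \<subseteq> V" using \<open>p \<in> P\<close> G g0 unfolding P_def groupfam_def by blast
  next
    fix p q assume pq: "p \<in> P" "q \<in> P" "p \<noteq> q"
    have d: "\<forall>g\<in>Gs. \<forall>h\<in>Gs. g \<noteq> h \<longrightarrow> g \<inter> h = {}" using G by (simp add: groupfam_def)
    consider "p \<in> Gs" "p \<noteq> g0" "q \<in> Gs" "q \<noteq> g0" | "p = g0 - {e}" "q \<in> Gs" "q \<noteq> g0"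
      | "q = g0 - {e}" "p \<in> Gs" "p \<noteq> g0" using pq unfolding P_def by auto
    then show "p \<inter> q = {}"
    proof cases
      case 1 then show ?thesis using d pq by auto
    next
      case 2 then have "g0 \<inter> q = {}" using d g0(1) by auto
      then show ?thesis using 2 by auto
    next
      case 3 then have "g0 \<inter> p = {}" using d g0(1) by auto
      then show ?thesis using 3 by auto
    qed
  qed
  have win: "W M'" if M': "e \<in> M'" "M' \<subseteq> V" "\<forall>p\<in>P. p \<inter> M' \<noteq> {}" for M'
  proof -
    have "\<forall>g\<in>Gs. \<forall>x\<in>g. \<forall>y\<in>g. x \<notin> M' \<longrightarrow> y \<notin> M' \<longrightarrow> x = y"
    proof (intro ballI impI)
      fix g x y assume g: "g \<in> Gs" "x \<in> g" "y \<in> g" "x \<notin> M'" "y \<notin> M'"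
      show "x = y"
      proof (rule ccontr)
        assume xy: "x \<noteq> y"
        have fg: "finite g" using G g fin unfolding groupfam_def by (meson finite_subset)
        show False
        proof (cases "g = g0")
          case True
          have "x \<noteq> e" "y \<noteq> e" using g M' by auto
          then have sub: "{x, y} \<subseteq> g0 - {e}" using g True by auto
          have "card {x, y} = card (g0 - {e})" using c0 xy by simp
          then have "g0 - {e} = {x, y}" using card_subset_eq[OF _ sub] fg True by auto
          moreover have "g0 - {e} \<in> P" by (simp add: P_def)
          ultimately show False using M' g by auto
        next
          case False
          have "card {x, y} \<le> card g" using g fg by (intro card_mono) auto
          then have "card g = 2" using xy c g False by fastforce
          then have "g \<in> P" using g False by (simp add: P_def)
          moreover have "g = {x, y}" using \<open>card g = 2\<close> g xy card_subset_eq[OF fg, of "{x,y}"] by auto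
          ultimately show False using M' g by auto
        qed
      qed
    qed
    then show ?thesis using W M' unfolding groupwin_def by blast
  qed
  show ?thesis by (rule MP_first[OF fin P eV win])
qed

lemma groupwin_SR:
  assumes "\<And>S. S \<subseteq> V \<Longrightarrow> (\<forall>g\<in>Gs. \<forall>x\<in>g. \<forall>y\<in>g. x \<notin> S \<longrightarrow> y \<notin> S \<longrightarrow> x = y) \<Longrightarrow> strong_resolving_set V E S"
  shows "groupwin V Gs (SR_win V E)"
  unfolding groupwin_def SR_win_def
proof (intro allI impI)
  fix M' assume "M' \<subseteq> V" "\<forall>g\<in>Gs. \<forall>x\<in>g. \<forall>y\<in>g. x \<notin> M' \<longrightarrow> y \<notin> M' \<longrightarrow> x = y"
  then have "strong_resolving_set V E M'" by (rule assms)
  then show "\<exists>S\<subseteq>M'. strong_resolving_set V E S" by blast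
qed

lemma bad_SR:
  assumes "\<And>S. S \<subseteq> V \<Longrightarrow> x \<notin> S \<Longrightarrow> y \<notin> S \<Longrightarrow> \<not> strong_resolving_set V E S"
  shows "bad V (SR_win V E) x y"
  unfolding bad_def SR_win_def using assms by (meson subset_iff order_trans)


context
  fixes m :: nat and a :: "nat \<Rightarrow> nat"
  assumes m2: "2 \<le> m" and pos: "\<forall>i\<in>{1..m}. 1 \<le> a i"
begin

lemma a_pos: "1 \<le> i \<Longrightarrow> i \<le> m \<Longrightarrow> 0 < a i"
proof -
  assume "1 \<le> i" "i \<le> m"
  then have "i \<in> {1..m}" by simp
  then have "1 \<le> a i" using pos by blast
  then show "0 < a i" by simp
qed

lemma mV_iff: "u \<in> multipartite_V m a \<longleftrightarrow> fst u \<in> {1..m} \<and> snd u < a (fst u)"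
  by (cases u) (simp add: multipartite_V_def)

lemma mE_iff: "multipartite_E m a u v \<longleftrightarrow> u \<in> multipartite_V m a \<and> v \<in> multipartite_V m a \<and> fst u \<noteq> fst v"
  by (simp add: multipartite_E_def)

lemma mV_fin: "finite (multipartite_V m a)"
proof -
  have "multipartite_V m a = (SIGMA i:{1..m}. {..<a i})" by (auto simp: multipartite_V_def)
  then show ?thesis by simp
qed

lemma m_simple: "simple_graph (multipartite_V m a) (multipartite_E m a)"
  unfolding simple_graph_def using mV_fin by (auto simp: mE_iff)

lemma other_part: "i \<in> {1..m} \<Longrightarrow> \<exists>j\<in>{1..m}. j \<noteq> i"
  using m2 by (intro bexI[of _ "if i = 1 then 2 else 1"]) auto

lemma m_walk2:
  assumes "u \<in> multipartite_V m a" "v \<in> multipartite_V m a" "fst u \<noteq> fst v"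
  shows "walk_between (multipartite_V m a) (multipartite_E m a) u v [u, v]"
  using assms by (simp add: walk_between_def walk_iff mE_iff)

lemma m_walk3:
  assumes "u \<in> multipartite_V m a" "v \<in> multipartite_V m a" "w \<in> multipartite_V m a"
     "fst u \<noteq> fst w" "fst w \<noteq> fst v"
  shows "walk_between (multipartite_V m a) (multipartite_E m a) u v [u, w, v]"
  using assms by (simp add: walk_between_def walk_iff mE_iff)

lemma m_mid:
  assumes "u \<in> multipartite_V m a"
  shows "\<exists>w\<in>multipartite_V m a. fst w \<noteq> fst u"
proof -
  have "fst u \<in> {1..m}" using assms by (simp add: mV_iff)
  then obtain j where j: "j \<in> {1..m}" "j \<noteq> fst u" using other_part by blast
  then have "(j, 0) \<in> multipartite_V m a" using a_pos by (auto simp: mV_iff)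
  then show ?thesis using j by force
qed

lemma m_connected: "connected_graph (multipartite_V m a) (multipartite_E m a)"
  unfolding connected_graph_def
proof (intro conjI ballI)
  have "(1, 0) \<in> multipartite_V m a" using a_pos m2 by (simp add: mV_iff)
  then show "multipartite_V m a \<noteq> {}" by blast
next
  fix u v assume uv: "u \<in> multipartite_V m a" "v \<in> multipartite_V m a"
  show "\<exists>xs. walk_between (multipartite_V m a) (multipartite_E m a) u v xs"
  proof (cases "fst u = fst v")
    case False then show ?thesis using m_walk2 uv by blast
  next
    case True
    obtain w where "w \<in> multipartite_V m a" "fst w \<noteq> fst u" using m_mid uv by blast
    then show ?thesis using m_walk3[OF uv(1) uv(2)] True by metis
  qed
qed

lemma m_d_le2:
  assumes "u \<in> multipartite_V m a" "v \<in> multipartite_V m a"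
  shows "gdist (multipartite_V m a) (multipartite_E m a) u v \<le> 2"
proof (cases "fst u = fst v")
  case False then show ?thesis using gdist_le[OF m_walk2[OF assms]] by simp
next
  case True
  obtain w where "w \<in> multipartite_V m a" "fst w \<noteq> fst u" using m_mid assms by blast
  then show ?thesis using gdist_le[OF m_walk3[OF assms, of w]] True by simp
qed

lemma m_d_same:
  assumes "u \<in> multipartite_V m a" "v \<in> multipartite_V m a" "fst u = fst v" "u \<noteq> v"
  shows "gdist (multipartite_V m a) (multipartite_E m a) u v = 2"
proof -
  have "\<not> gdist (multipartite_V m a) (multipartite_E m a) u v \<le> 1"
    using gdist_le1[OF m_connected assms(1,2)] assms by (auto simp: mE_iff)
  then show ?thesis using m_d_le2[OF assms(1,2)] by linarith
qed

lemma m_bad_part: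
  assumes "x \<in> multipartite_V m a" "y \<in> multipartite_V m a" "fst x = fst y" "x \<noteq> y"
    "x \<notin> S" "y \<notin> S"
  shows "\<not> strong_resolving_set (multipartite_V m a) (multipartite_E m a) S"
proof (rule MMD_not_SR[OF m_connected assms(1,2,4)])
  fix z assume "z \<in> multipartite_V m a"
  then show "gdist (multipartite_V m a) (multipartite_E m a) y z \<le> gdist (multipartite_V m a) (multipartite_E m a) y x \<and>
        gdist (multipartite_V m a) (multipartite_E m a) x z \<le> gdist (multipartite_V m a) (multipartite_E m a) x y"
    using m_d_le2 m_d_same assms by (metis)
qed (use assms in auto)

lemma m_univ_adj:
  assumes "y \<in> multipartite_V m a" "a (fst y) = 1" "z \<in> multipartite_V m a" "z \<noteq> y"
  shows "fst z \<noteq> fst y"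
  using assms by (cases y, cases z) (auto simp: mV_iff)

lemma m_bad_univ:
  assumes "x \<in> multipartite_V m a" "y \<in> multipartite_V m a" "a (fst x) = 1" "a (fst y) = 1" "x \<noteq> y"
    "x \<notin> S" "y \<notin> S"
  shows "\<not> strong_resolving_set (multipartite_V m a) (multipartite_E m a) S"
proof (rule MMD_not_SR[OF m_connected assms(1,2,5)])
  let ?d = "gdist (multipartite_V m a) (multipartite_E m a)"
  have d1: "?d y x = 1" "?d x y = 1"
    using gdist_pos[OF m_connected] gdist_le[OF m_walk2] m_univ_adj assms
    by (metis diff_Suc_1 le_antisym length_Cons list.size(3) One_nat_def)+
  fix z assume z: "z \<in> multipartite_V m a"
  have "?d y z \<le> 1"
  proof (cases "z = y")
    case True then show ?thesis using gdist_self[OF z] by simp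
  next
    case False then show ?thesis using gdist_le[OF m_walk2[OF assms(2) z]] m_univ_adj[OF assms(2,4) z] by fastforce
  qed
  moreover have "?d x z \<le> 1"
  proof (cases "z = x")
    case True then show ?thesis using gdist_self[OF z] by simp
  next
    case False then show ?thesis using gdist_le[OF m_walk2[OF assms(1) z]] m_univ_adj[OF assms(1,3) z] by fastforce
  qed
  ultimately show "?d y z \<le> ?d y x \<and> ?d x z \<le> ?d x y" using d1 by simp
qed (use assms in auto)

lemma m_other_in_part:
  assumes "y \<in> multipartite_V m a" "a (fst y) \<ge> 2"
  shows "\<exists>z\<in>multipartite_V m a. fst z = fst y \<and> z \<noteq> y"
proof -
  obtain i k where y: "y = (i, k)" by (cases y)
  let ?z = "(i, if k = 0 then 1 else 0)"
  have "?z \<in> multipartite_V m a" using assms y by (auto simp: mV_iff)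
  then show ?thesis using y by (intro bexI[of _ ?z]) auto
qed

lemma m_SR_suff:
  assumes S: "S \<subseteq> multipartite_V m a"
    and c1: "\<And>x y. x \<in> multipartite_V m a - S \<Longrightarrow> y \<in> multipartite_V m a - S \<Longrightarrow> fst x = fst y \<Longrightarrow> x = y"
    and c2: "\<And>x y. x \<in> multipartite_V m a - S \<Longrightarrow> y \<in> multipartite_V m a - S \<Longrightarrow> a (fst x) = 1 \<Longrightarrow> a (fst y) = 1 \<Longrightarrow> x = y"
  shows "strong_resolving_set (multipartite_V m a) (multipartite_E m a) S"
proof (rule SR_intro[OF m_connected S])
  fix x y assume xy: "x \<in> multipartite_V m a" "y \<in> multipartite_V m a" "x \<noteq> y" "x \<notin> S" "y \<notin> S"
  have f: "fst x \<noteq> fst y" using c1 xy by blast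
  have ax: "a (fst x) \<ge> 1" "a (fst y) \<ge> 1" using xy pos by (auto simp: mV_iff)
  have "a (fst x) \<ge> 2 \<or> a (fst y) \<ge> 2" using c2 xy ax by fastforce
  then show "\<exists>z\<in>S. on_geodesic (multipartite_V m a) (multipartite_E m a) x y z \<or>
                   on_geodesic (multipartite_V m a) (multipartite_E m a) y x z"
  proof
    assume "a (fst y) \<ge> 2"
    then obtain z where z: "z \<in> multipartite_V m a" "fst z = fst y" "z \<noteq> y" using m_other_in_part xy by blast
    then have zS: "z \<in> S" using c1 xy by blast
    have "geodesic (multipartite_V m a) (multipartite_E m a) y z [y, x, z]"
      using m_walk3[OF xy(2) z(1) xy(1)] f z m_d_same[OF xy(2) z(1)] by (simp add: geodesic_def)
    then have "on_geodesic (multipartite_V m a) (multipartite_E m a) x y z" unfolding on_geodesic_def by auto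
    then show ?thesis using zS by blast
  next
    assume "a (fst x) \<ge> 2"
    then obtain z where z: "z \<in> multipartite_V m a" "fst z = fst x" "z \<noteq> x" using m_other_in_part xy by blast
    then have zS: "z \<in> S" using c1 xy by blast
    have "geodesic (multipartite_V m a) (multipartite_E m a) x z [x, y, z]"
      using m_walk3[OF xy(1) z(1) xy(2)] f z m_d_same[OF xy(1) z(1)] by (simp add: geodesic_def)
    then have "on_geodesic (multipartite_V m a) (multipartite_E m a) y x z" unfolding on_geodesic_def by auto
    then show ?thesis using zS by blast
  qed
qed

definition mpart :: "nat \<Rightarrow> (nat \<times> nat) set" where "mpart i = {i} \<times> {..<a i}"
definition muniv :: "(nat \<times> nat) set" where "muniv = (\<lambda>i. (i, 0)) ` {i\<in>{1..m}. a i = 1}"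
definition mgroups :: "(nat \<times> nat) set set" where
  "mgroups = {mpart i | i. i \<in> {1..m} \<and> a i \<ge> 2} \<union> {muniv}"

lemma card_mpart: "card (mpart i) = a i"
  by (simp add: mpart_def card_cartesian_product)

lemma card_muniv: "card muniv = card {i\<in>{1..m}. a i = 1}"
  unfolding muniv_def by (rule card_image) (auto simp: inj_on_def)

lemma mpart_sub: "i \<in> {1..m} \<Longrightarrow> mpart i \<subseteq> multipartite_V m a"
  by (auto simp: mpart_def mV_iff)

lemma muniv_sub: "muniv \<subseteq> multipartite_V m a"
  using pos by (auto simp: muniv_def mV_iff)

lemma mpart_muniv: "a i \<ge> 2 \<Longrightarrow> mpart i \<inter> muniv = {}"
  by (auto simp: mpart_def muniv_def)

lemma mpart_disj: "i \<noteq> j \<Longrightarrow> mpart i \<inter> mpart j = {}"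
  by (auto simp: mpart_def)

lemma mpart_inj: "mpart i = mpart j \<Longrightarrow> i \<in> {1..m} \<Longrightarrow> i = j"
proof -
  assume eq: "mpart i = mpart j" and i: "i \<in> {1..m}"
  have "(i, 0) \<in> mpart i" using pos i unfolding mpart_def by fastforce
  then have "(i, 0) \<in> mpart j" using eq by simp
  then show "i = j" by (simp add: mpart_def)
qed

lemma mgroups_cases:
  assumes "g \<in> mgroups"
  obtains i where "i \<in> {1..m}" "a i \<ge> 2" "g = mpart i" | "g = muniv"
  using assms unfolding mgroups_def by blast

lemma m_groupfam: "groupfam (multipartite_V m a) mgroups"
  unfolding groupfam_def
proof (intro conjI ballI impI)
  fix g assume "g \<in> mgroups"
  then show "g \<subseteq> multipartite_V m a" using mpart_sub muniv_sub by (cases rule: mgroups_cases) auto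
next
  fix g h assume g: "g \<in> mgroups" and h: "h \<in> mgroups" and gh: "g \<noteq> h"
  from g show "g \<inter> h = {}"
  proof (cases rule: mgroups_cases)
    case (1 i)
    from h show ?thesis
    proof (cases rule: mgroups_cases)
      case (1 j)
      then have "i \<noteq> j" using gh \<open>g = mpart i\<close> by auto
      then show ?thesis using mpart_disj[of i j] 1 \<open>g = mpart i\<close> by simp
    next
      case 2 then show ?thesis using \<open>g = mpart i\<close> \<open>a i \<ge> 2\<close> mpart_muniv by simp
    qed
  next
    case 2
    from h show ?thesis
    proof (cases rule: mgroups_cases)
      case (1 j) then show ?thesis using \<open>g = muniv\<close> mpart_muniv[of j] by auto
    next
      case 2 then show ?thesis using \<open>g = muniv\<close> gh by simp
    qed
  qed
qed

lemma m_groupwin: "groupwin (multipartite_V m a) mgroups (SR_win (multipartite_V m a) (multipartite_E m a))"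
proof (rule groupwin_SR)
  fix S assume S: "S \<subseteq> multipartite_V m a"
    and g: "\<forall>g\<in>mgroups. \<forall>x\<in>g. \<forall>y\<in>g. x \<notin> S \<longrightarrow> y \<notin> S \<longrightarrow> x = y"
  show "strong_resolving_set (multipartite_V m a) (multipartite_E m a) S"
  proof (rule m_SR_suff[OF S])
    fix x y assume xy: "x \<in> multipartite_V m a - S" "y \<in> multipartite_V m a - S" "fst x = fst y"
    show "x = y"
    proof (cases "a (fst x) \<ge> 2")
      case True
      then have "mpart (fst x) \<in> mgroups" using xy by (auto simp: mgroups_def mV_iff)
      moreover have "x \<in> mpart (fst x)" "y \<in> mpart (fst x)" using xy by (cases x, cases y, auto simp: mpart_def mV_iff)+
      ultimately show ?thesis using g xy by blast
    next
      case False
      then have "a (fst x) = 1" using pos xy by (force simp: mV_iff)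
      then show ?thesis using xy by (cases x, cases y) (auto simp: mV_iff)
    qed
  next
    fix x y assume xy: "x \<in> multipartite_V m a - S" "y \<in> multipartite_V m a - S" "a (fst x) = 1" "a (fst y) = 1"
    have "x \<in> muniv" "y \<in> muniv" using xy by (cases x, cases y, auto simp: muniv_def mV_iff image_iff)+
    moreover have "muniv \<in> mgroups" by (simp add: mgroups_def)
    ultimately show "x = y" using g xy by blast
  qed
qed

lemma m_bad_mpart: "i \<in> {1..m} \<Longrightarrow> badclique (multipartite_V m a) (SR_win (multipartite_V m a) (multipartite_E m a)) (mpart i)"
  unfolding badclique_def
proof (intro ballI impI bad_SR)
  fix x y S assume xy: "i \<in> {1..m}" "x \<in> mpart i" "y \<in> mpart i" "x \<noteq> y" "x \<notin> S" "y \<notin> S"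
  have "x \<in> multipartite_V m a" "y \<in> multipartite_V m a" using mpart_sub xy by auto
  moreover have "fst x = fst y" using xy by (auto simp: mpart_def)
  ultimately show "\<not> strong_resolving_set (multipartite_V m a) (multipartite_E m a) S"
    using m_bad_part xy by blast
qed

lemma m_bad_muniv: "badclique (multipartite_V m a) (SR_win (multipartite_V m a) (multipartite_E m a)) muniv"
  unfolding badclique_def
proof (intro ballI impI bad_SR)
  fix x y S assume xy: "x \<in> muniv" "y \<in> muniv" "x \<noteq> y" "x \<notin> S" "y \<notin> S"
  have "x \<in> multipartite_V m a" "y \<in> multipartite_V m a" using muniv_sub xy by auto
  moreover have "a (fst x) = 1" "a (fst y) = 1" using xy by (auto simp: muniv_def)
  ultimately show "\<not> strong_resolving_set (multipartite_V m a) (multipartite_E m a) S"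
    using m_bad_univ xy by blast
qed

lemma mgroups_mpart: "i \<in> {1..m} \<Longrightarrow> a i \<ge> 2 \<Longrightarrow> mpart i \<in> mgroups"
  by (auto simp: mgroups_def)

lemma mgroups_muniv: "muniv \<in> mgroups"
  by (simp add: mgroups_def)


lemma m_caseB:
  assumes "card {i \<in> {1..m}. a i = 1} \<ge> 4 \<or> (\<exists>i\<in>{1..m}. a i \<ge> 4)
     \<or> (\<exists>i\<in>{1..m}. card {i \<in> {1..m}. a i = 1} = 3 \<and> a i = 3)
     \<or> (\<exists>i\<in>{1..m}. \<exists>j\<in>{1..m}. i \<noteq> j \<and> a i = 3 \<and> a j = 3)"
  shows "O_SR_is (multipartite_V m a) (multipartite_E m a) Out_B"
proof -
  let ?V = "multipartite_V m a" and ?W = "SR_win (multipartite_V m a) (multipartite_E m a)"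
  have fin: "finite ?V" by (rule mV_fin)
  have cu: "card (muniv) = card {i \<in> {1..m}. a i = 1}" by (rule card_muniv)
  have bu: "badclique ?V ?W (muniv)" by (rule m_bad_muniv)
  have bp: "\<And>i. i \<in> {1..m} \<Longrightarrow> badclique ?V ?W (mpart i)" by (rule m_bad_mpart)
  have su: "muniv \<subseteq> ?V" by (rule muniv_sub)
  have sp: "\<And>i. i \<in> {1..m} \<Longrightarrow> mpart i \<subseteq> ?V" by (rule mpart_sub)
  have "breaker_wins ?V ?W {} {} True \<and> breaker_wins ?V ?W {} {} False"
    using assms
  proof (elim disjE bexE conjE)
    assume "card {i \<in> {1..m}. a i = 1} \<ge> 4"
    then have "card (muniv) \<ge> 4" using cu by simp
    then show ?thesis using GB4[OF fin su _ bu] GN[OF fin su _ bu] by simp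
  next
    fix i assume i: "i \<in> {1..m}" "a i \<ge> 4"
    then have "card (mpart i) \<ge> 4" by (simp add: card_mpart)
    then show ?thesis using GB4[OF fin sp[OF i(1)] _ bp[OF i(1)]] GN[OF fin sp[OF i(1)] _ bp[OF i(1)]] by simp
  next
    fix i assume i: "i \<in> {1..m}" "card {i \<in> {1..m}. a i = 1} = 3" "a i = 3"
    then have c: "card (muniv) \<ge> 3" "card (mpart i) \<ge> 3" using cu by (simp_all add: card_mpart)
    have d: "muniv \<inter> mpart i = {}" using mpart_muniv[of i] i by auto
    show ?thesis using GB33[OF fin su c(1) bu sp[OF i(1)] c(2) bp[OF i(1)] d] GN[OF fin su c(1) bu] by simp
  next
    fix i j assume ij: "i \<in> {1..m}" "j \<in> {1..m}" "i \<noteq> j" "a i = 3" "a j = 3"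
    then have c: "card (mpart i) \<ge> 3" "card (mpart j) \<ge> 3" by (simp_all add: card_mpart)
    have d: "mpart i \<inter> mpart j = {}" using mpart_disj ij by blast
    show ?thesis using GB33[OF fin sp[OF ij(1)] c(1) bp[OF ij(1)] sp[OF ij(2)] c(2) bp[OF ij(2)] d]
        GN[OF fin sp[OF ij(1)] c(1) bp[OF ij(1)]] by simp
  qed
  then show ?thesis by (simp add: O_SR_is_def breaker_wins_M_game_def breaker_wins_B_game_def)
qed

lemma m_caseN:
  assumes "(card {i \<in> {1..m}. a i = 1} = 3 \<and> (\<forall>i\<in>{1..m}. a i \<le> 2)) \<or>
          (card {i \<in> {1..m}. a i = 1} \<le> 2 \<and> (\<exists>i\<in>{1..m}. a i = 3 \<and> (\<forall>j\<in>{1..m}. j \<noteq> i \<longrightarrow> a j \<le> 2)))"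
  shows "O_SR_is (multipartite_V m a) (multipartite_E m a) Out_N"
proof -
  let ?V = "multipartite_V m a" and ?W = "SR_win (multipartite_V m a) (multipartite_E m a)"
  have fin: "finite ?V" by (rule mV_fin)
  have cu: "card (muniv) = card {i \<in> {1..m}. a i = 1}" by (rule card_muniv)
  have bu: "badclique ?V ?W (muniv)" by (rule m_bad_muniv)
  have bp: "\<And>i. i \<in> {1..m} \<Longrightarrow> badclique ?V ?W (mpart i)" by (rule m_bad_mpart)
  have su: "muniv \<subseteq> ?V" by (rule muniv_sub)
  have sp: "\<And>i. i \<in> {1..m} \<Longrightarrow> mpart i \<subseteq> ?V" by (rule mpart_sub)
  have gf: "groupfam ?V (mgroups)" by (rule m_groupfam)
  have gw: "groupwin ?V (mgroups) ?W" by (rule m_groupwin)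
  have "maker_wins ?V ?W {} {} True \<and> breaker_wins ?V ?W {} {} False"
    using assms
  proof (elim disjE bexE conjE)
    assume s3: "card {i \<in> {1..m}. a i = 1} = 3" and al: "\<forall>i\<in>{1..m}. a i \<le> 2"
    have c3: "card (muniv) = 3" using cu s3 by simp
    have "\<forall>g\<in>mgroups. g \<noteq> muniv \<longrightarrow> card g \<le> 2"
      using al by (auto simp: mgroups_def card_mpart)
    then have "maker_wins ?V ?W {} {} True" using Gr_N[OF fin gf gw mgroups_muniv c3] by blast
    moreover have "breaker_wins ?V ?W {} {} False" using GN[OF fin su _ bu] c3 by simp
    ultimately show ?thesis by blast
  next
    fix i assume s2: "card {i \<in> {1..m}. a i = 1} \<le> 2" and i: "i \<in> {1..m}" "a i = 3"
      and al: "\<forall>j\<in>{1..m}. j \<noteq> i \<longrightarrow> a j \<le> 2"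
    have c3: "card (mpart i) = 3" using i by (simp add: card_mpart)
    have g0: "mpart i \<in> mgroups" using i by (auto simp: mgroups_def)
    have "\<forall>g\<in>mgroups. g \<noteq> mpart i \<longrightarrow> card g \<le> 2"
    proof (intro ballI impI)
      fix g assume g: "g \<in> mgroups" "g \<noteq> mpart i"
      then consider j where "j \<in> {1..m}" "g = mpart j" | "g = muniv" unfolding mgroups_def by blast
      then show "card g \<le> 2"
      proof cases
        case (1 j) then have "j \<noteq> i" using g by auto
        then show ?thesis using al 1 by (simp add: card_mpart)
      next
        case 2 then show ?thesis using cu s2 by simp
      qed
    qed
    then have "maker_wins ?V ?W {} {} True" using Gr_N[OF fin gf gw g0 c3] by blast
    moreover have "breaker_wins ?V ?W {} {} False" using GN[OF fin sp[OF i(1)] _ bp[OF i(1)]] c3 by simp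
    ultimately show ?thesis by blast
  qed
  then show ?thesis by (simp add: O_SR_is_def maker_wins_M_game_def breaker_wins_B_game_def)
qed

lemma m_caseM:
  assumes "\<forall>i\<in>{1..m}. max (card {i \<in> {1..m}. a i = 1}) (a i) \<le> 2"
  shows "O_SR_is (multipartite_V m a) (multipartite_E m a) Out_M"
proof -
  let ?V = "multipartite_V m a" and ?W = "SR_win (multipartite_V m a) (multipartite_E m a)"
  have fin: "finite ?V" by (rule mV_fin)
  have cu: "card (muniv) = card {i \<in> {1..m}. a i = 1}" by (rule card_muniv)
  have gf: "groupfam ?V (mgroups)" by (rule m_groupfam)
  have gw: "groupwin ?V (mgroups) ?W" by (rule m_groupwin)
  have "1 \<in> {1..m}" using m2 by simp
  then have s2: "card {i \<in> {1..m}. a i = 1} \<le> 2" using assms by fastforce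
  have "\<forall>g\<in>mgroups. card g \<le> 2"
    using assms s2 cu by (auto simp: mgroups_def card_mpart)
  then show ?thesis using Gr_M[OF fin gf gw]
    by (simp add: O_SR_is_def maker_wins_M_game_def maker_wins_B_game_def)
qed

end


definition cd :: "nat \<Rightarrow> nat \<Rightarrow> nat \<Rightarrow> nat" where
  "cd n i j = (if i \<le> j then min (j - i) (n - (j - i)) else min (i - j) (n - (i - j)))"

lemma sucmod: "i < n \<Longrightarrow> Suc i mod n = (if Suc i = n then 0 else Suc i)"
  by (simp add: mod_if)

lemma modsplit: "(v::nat) < n \<Longrightarrow> d < n \<Longrightarrow> (v + d) mod n = (if v + d < n then v + d else v + d - n)"
proof -
  assume a: "v < n" "d < n"
  show ?thesis
  proof (cases "v + d < n")
    case True then show ?thesis using True by simp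
  next
    case False
    then have "(v + d) mod n = (v + d - n) mod n" by (simp add: le_mod_geq)
    also have "\<dots> = v + d - n" using a by simp
    finally show ?thesis using False by simp
  qed
qed

lemma cE_iff: "cycle_E n i j \<longleftrightarrow> i < n \<and> j < n \<and>
   (j = (if Suc i = n then 0 else Suc i) \<or> i = (if Suc j = n then 0 else Suc j))"
  unfolding cycle_E_def using sucmod by auto

lemma cd_sym: "cd n i j = cd n j i"
  by (simp add: cd_def)

lemma cd_self: "cd n i i = 0" by (simp add: cd_def)

lemma cd_le: "cd n i j \<le> n div 2"
  by (simp add: cd_def) linarith

lemma cd_lip:
  assumes "cycle_E n j j'" "i < n"
  shows "cd n i j' \<le> Suc (cd n i j)"
  using assms unfolding cE_iff cd_def by (auto split: if_splits)

lemma cd_mod: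
  assumes "v < n" "d1 < n" "d2 < n"
  shows "cd n ((v + d1) mod n) ((v + d2) mod n) = cd n d1 d2"
proof (cases "v + d1 < n")
  case T1: True
  show ?thesis
  proof (cases "v + d2 < n")
    case True
    then show ?thesis using T1 assms by (simp add: modsplit cd_def)
  next
    case False
    then have "cd n ((v + d1) mod n) ((v + d2) mod n) = cd n (v + d1) (v + d2 - n)" using T1 assms by (simp add: modsplit)
    also have "\<dots> = cd n d1 d2" using T1 False assms unfolding cd_def min_def by (simp split: if_split) arith
    finally show ?thesis .
  qed
next
  case F1: False
  show ?thesis
  proof (cases "v + d2 < n")
    case True
    then have "cd n ((v + d1) mod n) ((v + d2) mod n) = cd n (v + d1 - n) (v + d2)" using F1 assms by (simp add: modsplit)
    also have "\<dots> = cd n d1 d2" using F1 True assms unfolding cd_def min_def by (simp split: if_split) arith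
    finally show ?thesis .
  next
    case False
    then have "cd n ((v + d1) mod n) ((v + d2) mod n) = cd n (v + d1 - n) (v + d2 - n)" using F1 assms by (simp add: modsplit)
    also have "\<dots> = cd n d1 d2" using F1 False assms unfolding cd_def min_def by (simp split: if_split)
    finally show ?thesis .
  qed
qed

lemma mod_inj:
  assumes "(v::nat) < n" "d1 < n" "d2 < n" "(v + d1) mod n = (v + d2) mod n"
  shows "d1 = d2"
  using assms by (simp add: modsplit split: if_splits)

lemma walk_cd:
  "successively (cycle_E n) xs \<Longrightarrow> xs \<noteq> [] \<Longrightarrow> set xs \<subseteq> cycle_V n \<Longrightarrow> cd n (hd xs) (last xs) \<le> length xs - 1"
proof (induction xs)
  case Nil then show ?case by simp
next
  case (Cons x ys)
  show ?case
  proof (cases "ys = []")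
    case True then show ?thesis by (simp add: cd_self)
  next
    case False
    have e: "cycle_E n x (hd ys)" and s: "successively (cycle_E n) ys" using Cons.prems False
      by (auto simp: successively_Cons)
    have e': "cycle_E n (hd ys) x" using e by (auto simp: cycle_E_def)
    have ih: "cd n (hd ys) (last ys) \<le> length ys - 1" using Cons.IH s False Cons.prems by auto
    have "last ys \<in> set ys" using False by simp
    then have lv: "last ys < n" using Cons.prems(3) by (auto simp: cycle_V_def)
    have "cd n (last ys) x \<le> Suc (cd n (last ys) (hd ys))" by (rule cd_lip[OF e' lv])
    then have "cd n x (last ys) \<le> Suc (cd n (hd ys) (last ys))" by (simp add: cd_sym)
    then show ?thesis using ih False by (cases ys) auto
  qed
qed

lemma c_simple: "n \<ge> 3 \<Longrightarrow> simple_graph (cycle_V n) (cycle_E n)"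
  unfolding simple_graph_def by (auto simp: cycle_V_def cE_iff)

definition fw :: "nat \<Rightarrow> nat \<Rightarrow> nat \<Rightarrow> nat list" where
  "fw n y L = map (\<lambda>t. (y + t) mod n) [0..<Suc L]"

lemma fw_walk:
  assumes "n \<ge> 3" "y < n"
  shows "walk_between (cycle_V n) (cycle_E n) y ((y + L) mod n) (fw n y L)"
proof -
  have "walk (cycle_V n) (cycle_E n) (fw n y L)"
    unfolding walk_def fw_def
  proof (intro conjI allI impI)
    show "set (map (\<lambda>t. (y + t) mod n) [0..<Suc L]) \<subseteq> cycle_V n" using assms by (auto simp: cycle_V_def)
  next
    fix i assume "Suc i < length (map (\<lambda>t. (y + t) mod n) [0..<Suc L])"
    then have i: "Suc i \<le> L" by simp
    have "(y + Suc i) mod n = Suc ((y + i) mod n) mod n" by (simp add: mod_Suc_eq)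
    then show "cycle_E n (map (\<lambda>t. (y + t) mod n) [0..<Suc L] ! i) (map (\<lambda>t. (y + t) mod n) [0..<Suc L] ! Suc i)"
      using i assms unfolding cycle_E_def by (simp del: upt_Suc add: nth_map_upt)
  qed simp
  moreover have "hd (fw n y L) = y" using assms by (simp add: fw_def del: upt_Suc add: hd_map)
  moreover have "last (fw n y L) = (y + L) mod n" by (simp add: fw_def del: upt_Suc add: last_map)
  ultimately show ?thesis by (simp add: walk_between_def)
qed

lemma fw_len: "length (fw n y L) = Suc L" by (simp add: fw_def)

lemma fw_mem: "t \<le> L \<Longrightarrow> (y + t) mod n \<in> set (fw n y L)"
  unfolding fw_def by (auto simp del: upt_Suc)

lemma mod_back:
  assumes "(y::nat) < n" "w < n"
  shows "(y + (w + n - y) mod n) mod n = w"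
proof -
  have "(y + (w + n - y) mod n) mod n = (y + (w + n - y)) mod n" by (rule mod_add_right_eq)
  also have "y + (w + n - y) = w + n" using assms by simp
  finally show ?thesis using assms by simp
qed

lemma c_walk_ex:
  assumes "n \<ge> 3" "y < n" "w < n"
  shows "\<exists>xs. walk_between (cycle_V n) (cycle_E n) y w xs \<and> length xs = Suc (cd n y w)"
proof -
  have sg: "simple_graph (cycle_V n) (cycle_E n)" using c_simple assms by simp
  have f1: "walk_between (cycle_V n) (cycle_E n) y w (fw n y ((w + n - y) mod n))"
    using fw_walk[OF assms(1,2), of "(w + n - y) mod n"] mod_back[OF assms(2,3)] by simp
  have f2: "walk_between (cycle_V n) (cycle_E n) y w (rev (fw n w ((y + n - w) mod n)))"
    using walk_rev[OF sg fw_walk[OF assms(1,3), of "(y + n - w) mod n"]] mod_back[OF assms(3,2)] by simp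
  have "cd n y w = (w + n - y) mod n \<or> cd n y w = (y + n - w) mod n"
    using assms unfolding cd_def by (auto simp: mod_if)
  then show ?thesis using f1 f2 by (auto simp: fw_len)
qed

lemma c_connected: "n \<ge> 3 \<Longrightarrow> connected_graph (cycle_V n) (cycle_E n)"
  unfolding connected_graph_def using c_walk_ex by (auto simp: cycle_V_def) blast

lemma c_gdist:
  assumes "n \<ge> 3" "y < n" "w < n"
  shows "gdist (cycle_V n) (cycle_E n) y w = cd n y w"
proof -
  obtain xs where xs: "walk_between (cycle_V n) (cycle_E n) y w xs" "length xs = Suc (cd n y w)"
    using c_walk_ex[OF assms] by blast
  have le: "gdist (cycle_V n) (cycle_E n) y w \<le> cd n y w" using gdist_le[OF xs(1)] xs(2) by simp
  obtain g where g: "geodesic (cycle_V n) (cycle_E n) y w g"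
    using gdist_geodesic[OF c_connected[OF assms(1)]] assms by (auto simp: cycle_V_def)
  then have "cd n y w \<le> length g - 1"
    using walk_cd[of n g] unfolding geodesic_def walk_between_def walk_iff by auto
  then show ?thesis using le g by (simp add: geodesic_def)
qed

lemma odd_not_SR:
  assumes n: "n \<ge> 3" "odd n" and xy: "x < n" "y < n" "x \<noteq> y" "cd n x y = n div 2" and S: "x \<notin> S" "y \<notin> S"
  shows "\<not> strong_resolving_set (cycle_V n) (cycle_E n) S"
proof (rule MMD_not_SR[OF c_connected[OF n(1)]])
  fix z assume "z \<in> cycle_V n"
  then show "gdist (cycle_V n) (cycle_E n) y z \<le> gdist (cycle_V n) (cycle_E n) y x \<and>
         gdist (cycle_V n) (cycle_E n) x z \<le> gdist (cycle_V n) (cycle_E n) x y"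
    using c_gdist[OF n(1)] xy cd_le cd_sym by (simp add: cycle_V_def)
qed (use xy S in \<open>auto simp: cycle_V_def\<close>)

lemma odd_bad:
  assumes n: "n \<ge> 3" "odd n" and xy: "x < n" "y < n" "x \<noteq> y" "cd n x y = n div 2"
  shows "bad (cycle_V n) (SR_win (cycle_V n) (cycle_E n)) x y"
  by (rule bad_SR) (use odd_not_SR[OF n xy] in blast)


lemma mod_neq: "(v::nat) < n \<Longrightarrow> d1 < n \<Longrightarrow> d2 < n \<Longrightarrow> d1 \<noteq> d2 \<Longrightarrow> (v + d1) mod n \<noteq> (v + d2) mod n"
  using mod_inj by blast

lemma mod_neq0: "(v::nat) < n \<Longrightarrow> 0 < d \<Longrightarrow> d < n \<Longrightarrow> (v + d) mod n \<noteq> v"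
  using mod_inj[of v n 0 d] by auto

lemma even_SR:
  assumes n: "n \<ge> 3" "even n" and S: "S \<subseteq> cycle_V n"
    and hit: "\<And>y. y < n \<Longrightarrow> y \<in> S \<or> (y + n div 2) mod n \<in> S"
  shows "strong_resolving_set (cycle_V n) (cycle_E n) S"
proof (rule SR_intro[OF c_connected[OF n(1)] S])
  let ?h = "n div 2"
  have n2: "n = 2 * ?h" using n(2) by simp
  fix x y assume xy: "x \<in> cycle_V n" "y \<in> cycle_V n" "x \<noteq> y" "x \<notin> S" "y \<notin> S"
  have xn: "x < n" and yn: "y < n" using xy by (auto simp: cycle_V_def)
  define y' where "y' = (y + ?h) mod n"
  have y'S: "y' \<in> S" using hit[OF yn] xy unfolding y'_def by auto
  have y'n: "y' < n" using n unfolding y'_def by simp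
  have hn: "?h < n" using n by simp
  have "cd n ((y + 0) mod n) ((y + ?h) mod n) = cd n 0 ?h" by (rule cd_mod[OF yn _ hn]) (use n in simp)
  then have "cd n y y' = ?h" using yn unfolding y'_def by (simp add: cd_def)
  then have gd: "gdist (cycle_V n) (cycle_E n) y y' = ?h" using c_gdist[OF n(1) yn y'n] by simp
  define t where "t = (x + n - y) mod n"
  have xt: "(y + t) mod n = x" unfolding t_def by (rule mod_back[OF yn xn])
  have tn: "t < n" unfolding t_def using n by simp
  have "\<exists>xs. geodesic (cycle_V n) (cycle_E n) y y' xs \<and> x \<in> set xs"
  proof (cases "t \<le> ?h")
    case True
    have "geodesic (cycle_V n) (cycle_E n) y y' (fw n y ?h)"
      using fw_walk[OF n(1) yn, of ?h] gd by (simp add: geodesic_def fw_len y'_def)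
    moreover have "x \<in> set (fw n y ?h)" using fw_mem[OF True, of y n] xt by simp
    ultimately show ?thesis by blast
  next
    case False
    define s where "s = t - ?h"
    have sh: "s \<le> ?h" using tn False n2 unfolding s_def by linarith
    have "(y' + s) mod n = (y + ?h + s) mod n" unfolding y'_def by (rule mod_add_left_eq)
    also have "y + ?h + s = y + t" using False unfolding s_def by simp
    finally have xs: "(y' + s) mod n = x" using xt by simp
    have "(y' + ?h) mod n = (y + ?h + ?h) mod n" unfolding y'_def by (rule mod_add_left_eq)
    also have "y + ?h + ?h = y + n" using n2 by simp
    finally have yy: "(y' + ?h) mod n = y" using yn by simp
    have sg: "simple_graph (cycle_V n) (cycle_E n)" by (rule c_simple[OF n(1)])
    have "walk_between (cycle_V n) (cycle_E n) y y' (rev (fw n y' ?h))"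
      using walk_rev[OF sg fw_walk[OF n(1) y'n, of ?h]] yy by simp
    then have "geodesic (cycle_V n) (cycle_E n) y y' (rev (fw n y' ?h))"
      using gd by (simp add: geodesic_def fw_len)
    moreover have "x \<in> set (rev (fw n y' ?h))" using fw_mem[OF sh, of y' n] xs by simp
    ultimately show ?thesis by blast
  qed
  then have "on_geodesic (cycle_V n) (cycle_E n) x y y'" unfolding on_geodesic_def by blast
  then show "\<exists>z\<in>S. on_geodesic (cycle_V n) (cycle_E n) x y z \<or> on_geodesic (cycle_V n) (cycle_E n) y x z"
    using y'S by blast
qed

definition egroups :: "nat \<Rightarrow> nat set set" where
  "egroups n = {{i, i + n div 2} | i. i < n div 2}"

lemma even_outcome:
  assumes n: "n \<ge> 3" "even n"
  shows "O_SR_is (cycle_V n) (cycle_E n) Out_M"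
proof -
  let ?h = "n div 2"
  have n2: "n = 2 * ?h" using n(2) by simp
  have fin: "finite (cycle_V n)" by (simp add: cycle_V_def)
  have gf: "groupfam (cycle_V n) (egroups n)"
    unfolding groupfam_def egroups_def
  proof (intro conjI ballI impI)
    fix g assume "g \<in> {{i, i + ?h} | i. i < ?h}"
    then show "g \<subseteq> cycle_V n" using n2 by (auto simp: cycle_V_def)
  next
    fix g g' assume "g \<in> {{i, i + ?h} | i. i < ?h}" "g' \<in> {{i, i + ?h} | i. i < ?h}" "g \<noteq> g'"
    then show "g \<inter> g' = {}" by auto
  qed
  have gw: "groupwin (cycle_V n) (egroups n) (SR_win (cycle_V n) (cycle_E n))"
  proof (rule groupwin_SR)
    fix S assume S: "S \<subseteq> cycle_V n" and g: "\<forall>g\<in>egroups n. \<forall>x\<in>g. \<forall>y\<in>g. x \<notin> S \<longrightarrow> y \<notin> S \<longrightarrow> x = y"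
    show "strong_resolving_set (cycle_V n) (cycle_E n) S"
    proof (rule even_SR[OF n S])
      fix y assume y: "y < n"
      show "y \<in> S \<or> (y + ?h) mod n \<in> S"
      proof (cases "y < ?h")
        case True
        then have G: "{y, y + ?h} \<in> egroups n" by (auto simp: egroups_def)
        have "y \<noteq> y + ?h" using n2 n by simp
        then have "y \<in> S \<or> y + ?h \<in> S" using g[rule_format, OF G, of y "y + ?h"] by blast
        moreover have "(y + ?h) mod n = y + ?h" using True n2 by simp
        ultimately show ?thesis by simp
      next
        case False
        have "{y - ?h, y} \<in> egroups n" using y n2 False unfolding egroups_def
          by (intro CollectI exI[of _ "y - ?h"]) auto
        then have G: "{y - ?h, y} \<in> egroups n" .
        have "y - ?h \<noteq> y" using n2 n False by simp
        then have "y - ?h \<in> S \<or> y \<in> S" using g[rule_format, OF G, of "y - ?h" y] by blast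
        moreover have "(y + ?h) mod n = y - ?h" using False y n2 by (simp add: modsplit)
        ultimately show ?thesis by auto
      qed
    qed
  qed
  have c: "\<forall>g\<in>egroups n. card g \<le> 2" by (auto simp: egroups_def card_insert_le)
  show ?thesis using Gr_M[OF fin gf gw c]
    by (simp add: O_SR_is_def maker_wins_M_game_def maker_wins_B_game_def)
qed

lemma c3_outcome: "O_SR_is (cycle_V 3) (cycle_E 3) Out_N"
proof -
  have fin: "finite (cycle_V 3)" by (simp add: cycle_V_def)
  have gf: "groupfam (cycle_V 3) {cycle_V 3}" by (simp add: groupfam_def)
  have gw: "groupwin (cycle_V 3) {cycle_V 3} (SR_win (cycle_V 3) (cycle_E 3))"
  proof (rule groupwin_SR)
    fix S assume "S \<subseteq> cycle_V 3" "\<forall>g\<in>{cycle_V 3}. \<forall>x\<in>g. \<forall>y\<in>g. x \<notin> S \<longrightarrow> y \<notin> S \<longrightarrow> x = y"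
    then show "strong_resolving_set (cycle_V 3) (cycle_E 3) S"
      by (intro SR_cofinite1 c_connected) auto
  qed
  have c3: "card (cycle_V 3) = 3" by (simp add: cycle_V_def)
  have "maker_wins (cycle_V 3) (SR_win (cycle_V 3) (cycle_E 3)) {} {} True"
    by (rule Gr_N[OF fin gf gw _ c3]) auto
  moreover have bc: "badclique (cycle_V 3) (SR_win (cycle_V 3) (cycle_E 3)) (cycle_V 3)"
    unfolding badclique_def
  proof (intro ballI impI)
    fix x y assume xy: "x \<in> cycle_V 3" "y \<in> cycle_V 3" "x \<noteq> y"
    then have "cd 3 x y = 3 div 2" by (auto simp: cycle_V_def cd_def)
    then show "bad (cycle_V 3) (SR_win (cycle_V 3) (cycle_E 3)) x y"
      using xy by (intro odd_bad) (auto simp: cycle_V_def)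
  qed
  have "breaker_wins (cycle_V 3) (SR_win (cycle_V 3) (cycle_E 3)) {} {} False"
    using GN[OF fin subset_refl[of "cycle_V 3"] _ bc] c3 by simp
  ultimately show ?thesis
    by (simp add: O_SR_is_def maker_wins_M_game_def breaker_wins_B_game_def)
qed

lemma odd_outcome:
  assumes n: "n \<ge> 5" "odd n"
  shows "O_SR_is (cycle_V n) (cycle_E n) Out_B"
proof -
  let ?k = "n div 2"
  have n2: "n = 2 * ?k + 1" using n(2) by simp
  have k2: "?k \<ge> 2" using n by simp
  have n3: "n \<ge> 3" using n by simp
  have fin: "finite (cycle_V n)" by (simp add: cycle_V_def)
  have bad1: "bad (cycle_V n) (SR_win (cycle_V n) (cycle_E n)) ((v + 1) mod n) ((v + (1 + ?k)) mod n)"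
    and bad2: "bad (cycle_V n) (SR_win (cycle_V n) (cycle_E n)) ((v + 1) mod n) ((v + (2 + ?k)) mod n)"
    if v: "v < n" for v
  proof -
    have lt: "1 < n" "1 + ?k < n" "2 + ?k < n" using n2 k2 by linarith+
    have "1 \<noteq> 1 + ?k" "1 \<noteq> 2 + ?k" using k2 by simp_all
    then have d: "(v + 1) mod n \<noteq> (v + (1 + ?k)) mod n" "(v + 1) mod n \<noteq> (v + (2 + ?k)) mod n"
      using mod_inj[OF v lt(1) lt(2)] mod_inj[OF v lt(1) lt(3)] by blast+
    have c1': "cd n 1 (1 + ?k) = ?k" unfolding cd_def using n2 by simp
    have c2': "cd n 1 (2 + ?k) = ?k" unfolding cd_def min_def using n2 by simp arith
    have c1: "cd n ((v + 1) mod n) ((v + (1 + ?k)) mod n) = ?k"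
      using cd_mod[OF v lt(1) lt(2)] c1' by simp
    have c2: "cd n ((v + 1) mod n) ((v + (2 + ?k)) mod n) = ?k"
      using cd_mod[OF v lt(1) lt(3)] c2' by simp
    show "bad (cycle_V n) (SR_win (cycle_V n) (cycle_E n)) ((v + 1) mod n) ((v + (1 + ?k)) mod n)"
      using d c1 n3 n(2) v by (intro odd_bad) auto
    show "bad (cycle_V n) (SR_win (cycle_V n) (cycle_E n)) ((v + 1) mod n) ((v + (2 + ?k)) mod n)"
      using d c2 n3 n(2) v by (intro odd_bad) auto
  qed
  have "breaker_wins (cycle_V n) (SR_win (cycle_V n) (cycle_E n)) {} {} True"
  proof (rule BM[OF fin])
    show "cycle_V n - ({} \<union> {}) \<noteq> {}" using n by (auto simp: cycle_V_def)
  next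
    fix v assume "v \<in> cycle_V n - ({} \<union> {})"
    then have v: "v < n" by (simp add: cycle_V_def)
    have lt: "0 < n" "1 < n" "1 + ?k < n" "2 + ?k < n" using n2 k2 by linarith+
    have p: "0 < (1::nat)" "0 < 1 + ?k" "0 < 2 + ?k" "(1::nat) \<noteq> 1 + ?k" "(1::nat) \<noteq> 2 + ?k" "1 + ?k \<noteq> 2 + ?k"
      using k2 by simp_all
    have d: "(v + 1) mod n \<noteq> v" "(v + (1 + ?k)) mod n \<noteq> v" "(v + (2 + ?k)) mod n \<noteq> v"
      "(v + 1) mod n \<noteq> (v + (1 + ?k)) mod n" "(v + 1) mod n \<noteq> (v + (2 + ?k)) mod n"
      "(v + (1 + ?k)) mod n \<noteq> (v + (2 + ?k)) mod n"
      using mod_neq0[OF v p(1) lt(2)] mod_neq0[OF v p(2) lt(3)] mod_neq0[OF v p(3) lt(4)]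
        mod_neq[OF v lt(2) lt(3) p(4)] mod_neq[OF v lt(2) lt(4) p(5)] mod_neq[OF v lt(3) lt(4) p(6)] by blast+
    show "\<exists>x y z. x \<in> cycle_V n - ({} \<union> {}) - {v} \<and> y \<in> cycle_V n - ({} \<union> {}) - {v} \<and>
             z \<in> cycle_V n - ({} \<union> {}) - {v} \<and> x \<noteq> y \<and> x \<noteq> z \<and> y \<noteq> z \<and>
             bad (cycle_V n) (SR_win (cycle_V n) (cycle_E n)) x y \<and> bad (cycle_V n) (SR_win (cycle_V n) (cycle_E n)) x z"
      by (rule exI[of _ "(v + 1) mod n"], rule exI[of _ "(v + (1 + ?k)) mod n"], rule exI[of _ "(v + (2 + ?k)) mod n"])
        (use d bad1[OF v] bad2[OF v] lt in \<open>auto simp: cycle_V_def\<close>)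
  qed auto
  moreover have "breaker_wins (cycle_V n) (SR_win (cycle_V n) (cycle_E n)) {} {} False"
  proof -
    have n0: "n - 1 < n" "(n - 1) + 1 = n" using n by auto
    have "bad (cycle_V n) (SR_win (cycle_V n) (cycle_E n)) (((n - 1) + 1) mod n) (((n - 1) + (1 + ?k)) mod n)"
      "bad (cycle_V n) (SR_win (cycle_V n) (cycle_E n)) (((n - 1) + 1) mod n) (((n - 1) + (2 + ?k)) mod n)"
      using bad1[OF n0(1)] bad2[OF n0(1)] by simp_all
    moreover have "((n - 1) + (1 + ?k)) mod n = ?k" "((n - 1) + (2 + ?k)) mod n = ?k + 1"
    proof -
      have e: "(n - 1) + (1 + ?k) = n + ?k" "(n - 1) + (2 + ?k) = n + (?k + 1)" using n by simp_all
      have l: "?k < n" "?k + 1 < n" using n2 k2 by linarith+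
      show "((n - 1) + (1 + ?k)) mod n = ?k" unfolding e(1) using l(1) by simp
      show "((n - 1) + (2 + ?k)) mod n = ?k + 1" unfolding e(2) using l(2) by (simp only: mod_add_self1 mod_less)
    qed
    ultimately have b: "bad (cycle_V n) (SR_win (cycle_V n) (cycle_E n)) 0 ?k"
      "bad (cycle_V n) (SR_win (cycle_V n) (cycle_E n)) 0 (?k + 1)" using n0 by simp_all
    show ?thesis
      by (rule BT[OF fin _ _ _ _ _ _ _ _ b]) (use n2 k2 in \<open>auto simp: cycle_V_def\<close>)
  qed
  ultimately show ?thesis
    by (simp add: O_SR_is_def breaker_wins_M_game_def breaker_wins_B_game_def)
qed


lemma pV_iff: "S \<in> petersen_V \<longleftrightarrow> S \<subseteq> {0..<5} \<and> card S = 2"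
  by (simp add: petersen_V_def)

lemma p_fin: "finite petersen_V"
proof -
  have "petersen_V \<subseteq> Pow {0..<5}" by (auto simp: petersen_V_def)
  then show ?thesis by (rule finite_subset) simp
qed

lemma pV_fin: "S \<in> petersen_V \<Longrightarrow> finite S"
  by (auto simp: pV_iff intro: finite_subset)

lemma p_simple: "simple_graph petersen_V petersen_E"
  unfolding simple_graph_def using p_fin
  by (auto simp: petersen_E_def pV_iff)

lemma p_common:
  assumes u: "u \<in> petersen_V" and w: "w \<in> petersen_V" and uw: "u \<noteq> w" "u \<inter> w \<noteq> {}"
  shows "{0..<5} - (u \<union> w) \<in> petersen_V"
proof -
  have fu: "finite u" "finite w" using u w pV_fin by auto
  have cu: "card u = 2" "card w = 2" using u w by (auto simp: pV_iff)
  have "card (u \<inter> w) \<ge> 1" using uw fu by (simp add: Suc_leI card_gt_0_iff)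
  moreover have "card (u \<inter> w) < 2"
  proof -
    have "u \<inter> w \<subset> u"
    proof
      show "u \<inter> w \<subseteq> u" by blast
      show "u \<inter> w \<noteq> u"
      proof
        assume "u \<inter> w = u"
        then have "u \<subseteq> w" by blast
        then have "u = w" using card_subset_eq[OF fu(2)] cu by auto
        then show False using uw by simp
      qed
    qed
    then have "card (u \<inter> w) < card u" by (rule psubset_card_mono[OF fu(1)])
    then show ?thesis using cu by simp
  qed
  ultimately have ci: "card (u \<inter> w) = 1" by simp
  have "card (u \<union> w) = 3" using card_Un_Int[OF fu] cu ci by simp
  moreover have "u \<union> w \<subseteq> {0..<5}" using u w by (auto simp: pV_iff)
  moreover have "finite (u \<union> w)" using fu by simp
  ultimately have "card ({0..<5} - (u \<union> w)) = 2" by (simp add: card_Diff_subset)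
  then show ?thesis by (auto simp: pV_iff)
qed

lemma p_walk:
  assumes u: "u \<in> petersen_V" and w: "w \<in> petersen_V"
  shows "\<exists>xs. walk_between petersen_V petersen_E u w xs \<and> length xs \<le> 3"
proof (cases "u = w")
  case True then show ?thesis using walk_single[OF u] by fastforce
next
  case False
  show ?thesis
  proof (cases "u \<inter> w = {}")
    case True
    then have "walk_between petersen_V petersen_E u w [u, w]" using u w
      by (simp add: walk_between_def walk_iff petersen_E_def)
    then show ?thesis by fastforce
  next
    case F2: False
    let ?c = "{0..<5} - (u \<union> w)"
    have c: "?c \<in> petersen_V" by (rule p_common[OF u w False F2])
    have "walk_between petersen_V petersen_E u w [u, ?c, w]" using u w c
      by (auto simp: walk_between_def walk_iff petersen_E_def)
    then show ?thesis by fastforce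
  qed
qed

lemma p_connected: "connected_graph petersen_V petersen_E"
  unfolding connected_graph_def
proof (intro conjI ballI)
  have "{0, 1} \<in> petersen_V" by (simp add: pV_iff)
  then show "petersen_V \<noteq> {}" by blast
next
  fix u w assume "u \<in> petersen_V" "w \<in> petersen_V"
  then show "\<exists>xs. walk_between petersen_V petersen_E u w xs" using p_walk by blast
qed

lemma p_d_le2: "u \<in> petersen_V \<Longrightarrow> w \<in> petersen_V \<Longrightarrow> gdist petersen_V petersen_E u w \<le> 2"
  using p_walk gdist_le by fastforce

lemma p_d2:
  assumes "u \<in> petersen_V" "w \<in> petersen_V" "u \<noteq> w" "u \<inter> w \<noteq> {}"
  shows "gdist petersen_V petersen_E u w = 2"
proof -
  have "\<not> gdist petersen_V petersen_E u w \<le> 1"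
    using gdist_le1[OF p_connected assms(1,2)] assms by (auto simp: petersen_E_def)
  then show ?thesis using p_d_le2[OF assms(1,2)] by linarith
qed

lemma p_bad:
  assumes "x \<in> petersen_V" "y \<in> petersen_V" "x \<noteq> y" "x \<inter> y \<noteq> {}"
  shows "bad petersen_V (SR_win petersen_V petersen_E) x y"
proof (rule bad_SR)
  fix S assume S: "x \<notin> S" "y \<notin> S"
  show "\<not> strong_resolving_set petersen_V petersen_E S"
  proof (rule MMD_not_SR[OF p_connected assms(1-3) _ S])
    fix z assume "z \<in> petersen_V"
    then show "gdist petersen_V petersen_E y z \<le> gdist petersen_V petersen_E y x \<and>
               gdist petersen_V petersen_E x z \<le> gdist petersen_V petersen_E x y"
      using p_d_le2 p_d2 assms by (metis inf_commute)
  qed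
qed

lemma p_triple:
  assumes c: "c \<in> {0..<5::nat}"
  shows "\<exists>d1 d2 d3. {c, d1} \<in> petersen_V \<and> {c, d2} \<in> petersen_V \<and> {c, d3} \<in> petersen_V \<and>
     d1 \<noteq> d2 \<and> d1 \<noteq> d3 \<and> d2 \<noteq> d3 \<and> d1 \<noteq> c \<and> d2 \<noteq> c \<and> d3 \<noteq> c"
proof -
  have "c = 0 \<or> c = 1 \<or> c = 2 \<or> c = 3 \<or> c = 4" using c by auto
  then show ?thesis
  proof (elim disjE)
    assume "c = 0" then show ?thesis
      by (intro exI[of _ "1"] exI[of _ "2"] exI[of _ "3"]) (simp add: pV_iff)
  next
    assume "c = 1" then show ?thesis
      by (intro exI[of _ "0"] exI[of _ "2"] exI[of _ "3"]) (simp add: pV_iff)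
  next
    assume "c = 2" then show ?thesis
      by (intro exI[of _ "0"] exI[of _ "1"] exI[of _ "3"]) (simp add: pV_iff)
  next
    assume "c = 3" then show ?thesis
      by (intro exI[of _ "0"] exI[of _ "1"] exI[of _ "2"]) (simp add: pV_iff)
  next
    assume "c = 4" then show ?thesis
      by (intro exI[of _ "0"] exI[of _ "1"] exI[of _ "2"]) (simp add: pV_iff)
  qed
qed

lemma p_centre_BT:
  assumes c: "c \<in> {0..<5::nat}" and M: "M \<subseteq> petersen_V" "\<forall>S\<in>M. c \<notin> S"
  shows "breaker_wins petersen_V (SR_win petersen_V petersen_E) M {} False"
proof -
  obtain d1 d2 d3 where d: "{c, d1} \<in> petersen_V" "{c, d2} \<in> petersen_V" "{c, d3} \<in> petersen_V"
     "d1 \<noteq> d2" "d1 \<noteq> d3" "d2 \<noteq> d3" "d1 \<noteq> c" "d2 \<noteq> c" "d3 \<noteq> c"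
    using p_triple[OF c] by blast
  have ne: "{c, d1} \<noteq> {c, d2}" "{c, d1} \<noteq> {c, d3}" "{c, d2} \<noteq> {c, d3}"
    using d by (auto simp: doubleton_eq_iff)
  have b: "bad petersen_V (SR_win petersen_V petersen_E) {c, d1} {c, d2}"
    "bad petersen_V (SR_win petersen_V petersen_E) {c, d1} {c, d3}"
    using p_bad d ne by auto
  show ?thesis
    by (rule BT[OF p_fin _ _ _ _ _ _ _ _ b]) (use M d ne in auto)
qed

lemma pet_outcome: "O_SR_is petersen_V petersen_E Out_B"
proof -
  have "breaker_wins petersen_V (SR_win petersen_V petersen_E) {} {} False"
    by (rule p_centre_BT[of 0]) auto
  moreover have "breaker_wins petersen_V (SR_win petersen_V petersen_E) {} {} True"
  proof (rule bw_maker)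
    show "petersen_V - ({} \<union> {}) \<noteq> {}" using p_connected by (simp add: connected_graph_def)
    show "\<forall>v\<in>petersen_V - ({} \<union> {}). breaker_wins petersen_V (SR_win petersen_V petersen_E) (insert v {}) {} False"
    proof
      fix v assume v: "v \<in> petersen_V - ({} \<union> {})"
      have "\<exists>c\<in>{0..<5::nat}. c \<notin> v"
      proof (rule ccontr)
        assume "\<not> ?thesis"
        then have "{0..<5} \<subseteq> v" by auto
        then have "card {0..<5::nat} \<le> card v" using pV_fin v by (intro card_mono) auto
        then show False using v by (simp add: pV_iff)
      qed
      then obtain c where "c \<in> {0..<5::nat}" "c \<notin> v" by blast
      then show "breaker_wins petersen_V (SR_win petersen_V petersen_E) (insert v {}) {} False"
        using v by (intro p_centre_BT) auto
    qed
  qed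
  ultimately show ?thesis by (simp add: O_SR_is_def breaker_wins_M_game_def breaker_wins_B_game_def)
qed


lemma distinct_hd_last:
  assumes "distinct Q" "Q \<noteq> []" "hd Q = last Q"
  shows "Q = [hd Q]"
proof (cases Q)
  case Nil then show ?thesis using assms by simp
next
  case (Cons a R)
  show ?thesis
  proof (cases "R = []")
    case True then show ?thesis using Cons by simp
  next
    case False
    then have "last R = a" using assms Cons by simp
    then have "a \<in> set R" using False last_in_set by metis
    then show ?thesis using assms Cons by simp
  qed
qed

lemma path_unique:
  assumes sg: "simple_graph V E" and nc: "\<not> has_cycle V E"
  shows "walk V E P \<Longrightarrow> distinct P \<Longrightarrow> walk V E Q \<Longrightarrow> distinct Q \<Longrightarrow> hd P = hd Q \<Longrightarrow> last P = last Q \<Longrightarrow> P = Q"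
proof (induction P arbitrary: Q)
  case Nil then show ?case by (simp add: walk_iff)
next
  case (Cons u P1)
  have Qne: "Q \<noteq> []" using Cons.prems by (simp add: walk_iff)
  then obtain Q1 where Q: "Q = u # Q1" using Cons.prems(5) by (cases Q) auto
  show ?case
  proof (cases "P1 = []")
    case True
    then have "hd Q = last Q" using Cons.prems(5,6) by simp
    then have "Q = [u]" using distinct_hd_last[OF Cons.prems(4) Qne] Q by simp
    then show ?thesis using True by simp
  next
    case P1ne: False
    have lP: "last P1 = last Q" using Cons.prems(6) P1ne by simp
    have Q1ne: "Q1 \<noteq> []"
    proof
      assume "Q1 = []"
      then have "last P1 = u" using lP Q by simp
      then have "u \<in> set P1" using P1ne last_in_set by metis
      then show False using Cons.prems(2) by simp
    qed
    have lQ: "last P1 = last Q1" using lP Q Q1ne by simp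
    have wP1: "walk V E P1" and wQ1: "walk V E Q1" and dP1: "distinct P1" and dQ1: "distinct Q1"
      and sP: "successively E (u # P1)" and sQ: "successively E (u # Q1)"
      and VP: "set (u # P1) \<subseteq> V" and VQ: "set (u # Q1) \<subseteq> V"
      using Cons.prems P1ne Q1ne Q by (auto simp: walk_iff successively_Cons)
    show ?thesis
    proof (cases "hd P1 = hd Q1")
      case True
      then have "P1 = Q1" using Cons.IH[OF wP1 dP1 wQ1 dQ1 True lQ] by simp
      then show ?thesis using Q by simp
    next
      case False
      have "\<exists>x\<in>set P1. x \<in> set Q1" using lQ P1ne Q1ne last_in_set by metis
      then obtain A w B where PA: "P1 = A @ w # B" "w \<in> set Q1" "\<forall>y\<in>set A. y \<notin> set Q1"
        using split_list_first_prop[of P1 "\<lambda>x. x \<in> set Q1"] by blast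
      obtain C D where QC: "Q1 = C @ w # D" using PA(2) split_list by metis
      define cyc where "cyc = u # (A @ [w]) @ rev C"
      have uA: "u \<notin> set A" "u \<noteq> w" "u \<notin> set C"
        using Cons.prems(2) Cons.prems(4) PA QC Q by auto
      have dcyc: "distinct cyc"
        unfolding cyc_def using uA PA dQ1 dP1 QC by auto
      have lencyc: "length cyc \<ge> 3"
      proof (rule ccontr)
        assume "\<not> length cyc \<ge> 3"
        then have "A = [] \<and> C = []" unfolding cyc_def by (cases A; cases C) auto
        then show False using False PA QC by simp
      qed
      have s1: "successively E (u # A @ [w])"
      proof -
        have "successively E ((u # A @ [w]) @ B)" using sP PA by simp
        then show ?thesis by (rule succ_appendD1)
      qed
      have s2: "successively E (C @ [w])"
      proof -
        have "successively E ((C @ [w]) @ D)" using sQ QC by (simp add: successively_Cons)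
        then show ?thesis by (rule succ_appendD1)
      qed
      have s2': "successively E (w # rev C)"
      proof -
        have "successively (\<lambda>x y. E y x) (C @ [w])"
          by (rule successively_mono[OF s2]) (use sg in \<open>auto simp: simple_graph_def\<close>)
        then have "successively E (rev (C @ [w]))" by (simp only: successively_rev)
        moreover have "rev (C @ [w]) = w # rev C" by simp
        ultimately show ?thesis by (simp only:)
      qed
      have scyc: "successively E cyc"
      proof -
        have "successively E ((u # A @ [w]) @ rev C)"
          unfolding successively_append_iff using s1 s2' by (cases "rev C") (auto simp: successively_Cons)
        then show ?thesis unfolding cyc_def by simp
      qed
      have "last cyc = hd (C @ [w])" unfolding cyc_def by (cases C) (auto simp: last_rev)
      moreover have "E u (hd (C @ [w]))" using sQ QC by (cases C) (auto simp: successively_Cons)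
      ultimately have ecyc: "E (last cyc) (hd cyc)" using sg unfolding cyc_def simple_graph_def by auto
      have Vcyc: "set cyc \<subseteq> V" unfolding cyc_def using VP VQ PA QC by auto
      have "has_cycle V E" unfolding has_cycle_def
        using dcyc lencyc ecyc scyc Vcyc by (intro exI[of _ cyc]) (auto simp: walk_iff cyc_def)
      then show ?thesis using nc by simp
    qed
  qed
qed

lemma path_geodesic:
  assumes t: "is_tree V E" and w: "walk V E P" "distinct P"
  shows "geodesic V E (hd P) (last P) P"
proof -
  have sg: "simple_graph V E" and c: "connected_graph V E" and nc: "\<not> has_cycle V E"
    using t by (auto simp: is_tree_def)
  have hl: "hd P \<in> V" "last P \<in> V" using w by (auto simp: walk_iff)
  obtain G where G: "geodesic V E (hd P) (last P) G" using gdist_geodesic[OF c hl] by blast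
  have "distinct G" by (rule geodesic_distinct[OF G])
  moreover have "walk V E G" "hd G = hd P" "last G = last P" using G by (auto simp: geodesic_def walk_between_def)
  ultimately have "P = G" using path_unique[OF sg nc w] by simp
  then show ?thesis using G by simp
qed

definition tpaths :: "'a set \<Rightarrow> ('a \<Rightarrow> 'a \<Rightarrow> bool) \<Rightarrow> 'a \<Rightarrow> 'a \<Rightarrow> 'a list set" where
  "tpaths V E x y = {P. walk V E P \<and> distinct P \<and> x \<in> set P \<and> y \<in> set P}"

lemma max_path:
  assumes t: "is_tree V E" and xy: "x \<in> V" "y \<in> V"
  shows "\<exists>P\<in>tpaths V E x y. \<forall>Q\<in>tpaths V E x y. length Q \<le> length P"
proof -
  have sg: "simple_graph V E" and c: "connected_graph V E" using t by (auto simp: is_tree_def)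
  have fin: "finite V" using sg by (simp add: simple_graph_def)
  obtain G where G: "geodesic V E x y G" using gdist_geodesic[OF c xy] by blast
  have "G \<in> tpaths V E x y" using G geodesic_distinct[OF G]
    by (auto simp: tpaths_def geodesic_def walk_between_def walk_iff)
  moreover have "\<forall>Q. Q \<in> tpaths V E x y \<longrightarrow> length Q < Suc (card V)"
  proof (intro allI impI)
    fix Q assume "Q \<in> tpaths V E x y"
    then have "distinct Q" "set Q \<subseteq> V" by (auto simp: tpaths_def walk_iff)
    then have "card (set Q) \<le> card V" using fin by (intro card_mono) auto
    then show "length Q < Suc (card V)" using distinct_card[OF \<open>distinct Q\<close>] by simp
  qed
  ultimately show ?thesis using Lattices_Big.ex_has_greatest_nat[of "\<lambda>Q. Q \<in> tpaths V E x y" G length "Suc (card V)"]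
    by blast
qed

lemma max_path_hd_leaf:
  assumes t: "is_tree V E" and P: "P \<in> tpaths V E x y" and mx: "\<forall>Q\<in>tpaths V E x y. length Q \<le> length P"
    and len: "length P \<ge> 2"
  shows "degree V E (hd P) = 1"
proof -
  have sg: "simple_graph V E" and nc: "\<not> has_cycle V E" using t by (auto simp: is_tree_def)
  have fin: "finite V" using sg by (simp add: simple_graph_def)
  obtain a p R where PR: "P = a # p # R" using len by (cases P; cases "tl P") auto
  have wP: "successively E P" "set P \<subseteq> V" "distinct P" using P by (auto simp: tpaths_def walk_iff)
  have eap: "E a p" using wP PR by simp
  have "{u \<in> V. E a u} = {p}"
  proof
    show "{p} \<subseteq> {u \<in> V. E a u}" using eap wP PR by auto
  next
    show "{u \<in> V. E a u} \<subseteq> {p}"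
    proof
      fix u assume u: "u \<in> {u \<in> V. E a u}"
      show "u \<in> {p}"
      proof (rule ccontr)
        assume up: "u \<notin> {p}"
        show False
        proof (cases "u \<in> set P")
          case False
          have eua: "E u a" using u sg by (auto simp: simple_graph_def)
          have "successively E (u # P)" using eua wP PR by simp
          then have "u # P \<in> tpaths V E x y" using P u False
            by (auto simp: tpaths_def walk_iff)
          then show False using mx by fastforce
        next
          case True
          then obtain k where k: "k < length P" "P ! k = u" by (metis in_set_conv_nth)
          have k0: "k \<noteq> 0"
          proof
            assume "k = 0"
            then have "u = a" using k PR by simp
            then have "E a a" using u by simp
            then show False using sg by (simp add: simple_graph_def)
          qed
          have k1: "k \<noteq> 1" using k PR up by auto
          define cyc where "cyc = take (Suc k) P"
          have wPP: "walk V E P" using P by (simp add: tpaths_def)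
          have "walk V E cyc" unfolding cyc_def
            using walk_take[OF wPP k(1)] by (simp add: walk_between_def)
          moreover have "distinct cyc" unfolding cyc_def using wP by simp
          moreover have "length cyc \<ge> 3" unfolding cyc_def using k k0 k1 by simp
          moreover have "E (last cyc) (hd cyc)"
          proof -
            have "last cyc = u" unfolding cyc_def using k by (simp add: take_Suc_conv_app_nth)
            moreover have "hd cyc = a" unfolding cyc_def using PR by simp
            ultimately show ?thesis using u sg by (auto simp: simple_graph_def)
          qed
          ultimately have "has_cycle V E" unfolding has_cycle_def by blast
          then show False using nc by simp
        qed
      qed
    qed
  qed
  then show ?thesis using PR by (simp add: degree_def)
qed

lemma rev_tpaths:
  assumes sg: "simple_graph V E" and P: "P \<in> tpaths V E x y"
  shows "rev P \<in> tpaths V E x y"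
proof -
  have "successively (\<lambda>a b. E b a) P" using P sg
    by (auto simp: tpaths_def walk_iff simple_graph_def intro: successively_mono)
  then show ?thesis using P by (auto simp: tpaths_def walk_iff)
qed

lemma seg_on_geodesic:
  assumes t: "is_tree V E" and w: "walk V E P" "distinct P" and ij: "i \<le> j" "j < length P"
  shows "on_geodesic V E (P ! j) (P ! i) (last P)"
proof -
  have wd: "walk V E (drop i P)" using walk_drop[OF w(1)] ij by (auto simp: walk_between_def)
  have g: "geodesic V E (hd (drop i P)) (last (drop i P)) (drop i P)"
    by (rule path_geodesic[OF t wd]) (use w in simp)
  have "hd (drop i P) = P ! i" using ij by (simp add: hd_drop_conv_nth)
  moreover have "last (drop i P) = last P" using ij by simp
  moreover have "P ! j \<in> set (drop i P)"
  proof -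
    have "drop i P ! (j - i) = P ! j" using ij by simp
    moreover have "j - i < length (drop i P)" using ij by simp
    ultimately show ?thesis by (metis nth_mem)
  qed
  ultimately show ?thesis using g unfolding on_geodesic_def by auto
qed

lemma tree_SR:
  assumes t: "is_tree V E" and S: "S \<subseteq> V"
    and L: "\<And>x y. x \<in> V \<Longrightarrow> y \<in> V \<Longrightarrow> degree V E x = 1 \<Longrightarrow> degree V E y = 1 \<Longrightarrow> x \<notin> S \<Longrightarrow> y \<notin> S \<Longrightarrow> x = y"
  shows "strong_resolving_set V E S"
proof -
  have sg: "simple_graph V E" and c: "connected_graph V E" using t by (auto simp: is_tree_def)
  show ?thesis
  proof (rule SR_intro[OF c S])
    fix x y assume xy: "x \<in> V" "y \<in> V" "x \<noteq> y" "x \<notin> S" "y \<notin> S"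
    obtain P where P: "P \<in> tpaths V E x y" and mx: "\<forall>Q\<in>tpaths V E x y. length Q \<le> length P"
      using max_path[OF t xy(1,2)] by blast
    have wP: "walk V E P" "distinct P" "x \<in> set P" "y \<in> set P" using P by (auto simp: tpaths_def)
    have len: "length P \<ge> 2"
    proof -
      have "card {x, y} \<le> card (set P)" using wP by (intro card_mono) auto
      then show ?thesis using xy(3) distinct_card[OF wP(2)] by simp
    qed
    have Pr: "rev P \<in> tpaths V E x y" by (rule rev_tpaths[OF sg P])
    have mxr: "\<forall>Q\<in>tpaths V E x y. length Q \<le> length (rev P)" using mx by simp
    have dh: "degree V E (hd P) = 1" by (rule max_path_hd_leaf[OF t P mx len])
    have dl: "degree V E (last P) = 1"
      using max_path_hd_leaf[OF t Pr mxr] len by (simp add: hd_rev)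
    have hlV: "hd P \<in> V" "last P \<in> V" using wP by (auto simp: walk_iff)
    have hl: "hd P \<noteq> last P" using wP(2) len
      by (metis distinct_hd_last le_antisym length_Cons list.size(3) not_less_eq_eq numeral_2_eq_2 zero_le list.distinct(1) walk_iff)
    have key: "\<exists>z\<in>S. on_geodesic V E x y z \<or> on_geodesic V E y x z"
      if Q: "walk V E Q" "distinct Q" "x \<in> set Q" "y \<in> set Q" "last Q \<in> S" for Q
    proof -
      obtain i where i: "i < length Q" "Q ! i = x" using Q(3) by (metis in_set_conv_nth)
      obtain j where j: "j < length Q" "Q ! j = y" using Q(4) by (metis in_set_conv_nth)
      show ?thesis
      proof (cases "i \<le> j")
        case True
        then have "on_geodesic V E y x (last Q)" using seg_on_geodesic[OF t Q(1,2) True j(1)] i j by simp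
        then show ?thesis using Q(5) by blast
      next
        case False
        then have "on_geodesic V E x y (last Q)" using seg_on_geodesic[OF t Q(1,2) _ i(1), of j] i j by simp
        then show ?thesis using Q(5) by blast
      qed
    qed
    have "last P \<in> S \<or> hd P \<in> S" using L[OF hlV(2) hlV(1) dl dh] hl by metis
    then show "\<exists>z\<in>S. on_geodesic V E x y z \<or> on_geodesic V E y x z"
    proof
      assume "last P \<in> S"
      then show ?thesis using key[OF wP] by blast
    next
      assume "hd P \<in> S"
      moreover have "walk V E (rev P)" "distinct (rev P)" "x \<in> set (rev P)" "y \<in> set (rev P)"
        using Pr by (auto simp: tpaths_def)
      ultimately show ?thesis using key[of "rev P"] by (simp add: last_rev)
    qed
  qed
qed


lemma tree_outcome:
  assumes t: "is_tree V E"
  shows "(num_leaves V E = 2 \<longrightarrow> O_SR_is V E Out_M) \<and>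
         (num_leaves V E = 3 \<longrightarrow> O_SR_is V E Out_N) \<and>
         (num_leaves V E \<ge> 4 \<longrightarrow> O_SR_is V E Out_B)"
proof -
  let ?L = "{v \<in> V. degree V E v = 1}"
  let ?W = "SR_win V E"
  have sg: "simple_graph V E" using t by (simp add: is_tree_def)
  have fin: "finite V" using sg by (simp add: simple_graph_def)
  have cL: "card ?L = num_leaves V E" by (simp add: num_leaves_def)
  have sL: "?L \<subseteq> V" by blast
  have bc: "badclique V ?W ?L"
    unfolding badclique_def
  proof (intro ballI impI bad_SR)
    fix x y S assume xy: "x \<in> ?L" "y \<in> ?L" "x \<noteq> y" "x \<notin> S" "y \<notin> S"
    then show "\<not> strong_resolving_set V E S" using leaves_not_SR[OF sg] by blast
  qed
  have gf: "groupfam V {?L}" by (simp add: groupfam_def)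
  have gw: "groupwin V {?L} ?W"
  proof (rule groupwin_SR)
    fix S assume S: "S \<subseteq> V" "\<forall>g\<in>{?L}. \<forall>x\<in>g. \<forall>y\<in>g. x \<notin> S \<longrightarrow> y \<notin> S \<longrightarrow> x = y"
    show "strong_resolving_set V E S"
      by (rule tree_SR[OF t S(1)]) (use S(2) in auto)
  qed
  have A: "O_SR_is V E Out_M" if "num_leaves V E = 2"
  proof -
    have "\<forall>g\<in>{?L}. card g \<le> 2" using that cL by simp
    then show ?thesis using Gr_M[OF fin gf gw]
      by (simp add: O_SR_is_def maker_wins_M_game_def maker_wins_B_game_def)
  qed
  have B: "O_SR_is V E Out_N" if "num_leaves V E = 3"
  proof -
    have c3: "card ?L = 3" using that cL by simp
    have "maker_wins V ?W {} {} True" by (rule Gr_N[OF fin gf gw _ c3]) auto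
    moreover have "breaker_wins V ?W {} {} False" using GN[OF fin sL _ bc] c3 by simp
    ultimately show ?thesis by (simp add: O_SR_is_def maker_wins_M_game_def breaker_wins_B_game_def)
  qed
  have C: "O_SR_is V E Out_B" if "num_leaves V E \<ge> 4"
  proof -
    have c4: "card ?L \<ge> 4" using that cL by simp
    have "breaker_wins V ?W {} {} True" using GB4[OF fin sL c4 bc] .
    moreover have "breaker_wins V ?W {} {} False" using GN[OF fin sL _ bc] c4 by simp
    ultimately show ?thesis by (simp add: O_SR_is_def breaker_wins_M_game_def breaker_wins_B_game_def)
  qed
  show ?thesis using A B C by blast
qed


theorem mainTheorem8:
  shows
  "(\<forall>(V :: 'a set) E. is_tree V E \<and> card V \<ge> 2 \<longrightarrow>
       (num_leaves V E = 2 \<longrightarrow> O_SR_is V E Out_M) \<and>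
       (num_leaves V E = 3 \<longrightarrow> O_SR_is V E Out_N) \<and>
       (num_leaves V E \<ge> 4 \<longrightarrow> O_SR_is V E Out_B))
   \<and> (\<forall>n::nat. n \<ge> 3 \<longrightarrow>
       (even n \<longrightarrow> O_SR_is (cycle_V n) (cycle_E n) Out_M) \<and>
       (n = 3 \<longrightarrow> O_SR_is (cycle_V n) (cycle_E n) Out_N) \<and>
       (odd n \<and> n \<ge> 5 \<longrightarrow> O_SR_is (cycle_V n) (cycle_E n) Out_B))
   \<and> O_SR_is petersen_V petersen_E Out_B
   \<and> (\<forall>(m::nat) (a::nat \<Rightarrow> nat). m \<ge> 2 \<and> (\<forall>i\<in>{1..m}. a i \<ge> 1) \<and> (\<Sum>i=1..m. a i) \<ge> 3 \<longrightarrow>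
       (let s = card {i \<in> {1..m}. a i = 1}; G = multipartite_V m a; EG = multipartite_E m a in
        ((s \<ge> 4 \<or> (\<exists>i\<in>{1..m}. a i \<ge> 4) \<or> (\<exists>i\<in>{1..m}. s = 3 \<and> a i = 3)
            \<or> (\<exists>i\<in>{1..m}. \<exists>j\<in>{1..m}. i \<noteq> j \<and> a i = 3 \<and> a j = 3))
           \<longrightarrow> O_SR_is G EG Out_B) \<and>
        (((s = 3 \<and> (\<forall>i\<in>{1..m}. a i \<le> 2)) \<or>
          (s \<le> 2 \<and> (\<exists>i\<in>{1..m}. a i = 3 \<and> (\<forall>j\<in>{1..m}. j \<noteq> i \<longrightarrow> a j \<le> 2))))
           \<longrightarrow> O_SR_is G EG Out_N) \<and>
        ((\<forall>i\<in>{1..m}. max s (a i) \<le> 2) \<longrightarrow> O_SR_is G EG Out_M)))"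
  proof (intro conjI allI impI)
  fix V :: "'a set" and E
  assume "is_tree V E \<and> card V \<ge> 2"
  then have t: "is_tree V E" by simp
  show "num_leaves V E = 2 \<Longrightarrow> O_SR_is V E Out_M" using tree_outcome[OF t] by blast
  show "num_leaves V E = 3 \<Longrightarrow> O_SR_is V E Out_N" using tree_outcome[OF t] by blast
  show "num_leaves V E \<ge> 4 \<Longrightarrow> O_SR_is V E Out_B" using tree_outcome[OF t] by blast
next
  fix n :: nat assume n: "n \<ge> 3"
  show "even n \<Longrightarrow> O_SR_is (cycle_V n) (cycle_E n) Out_M" using even_outcome[OF n] by blast
  show "n = 3 \<Longrightarrow> O_SR_is (cycle_V n) (cycle_E n) Out_N" using c3_outcome by simp
  show "odd n \<and> n \<ge> 5 \<Longrightarrow> O_SR_is (cycle_V n) (cycle_E n) Out_B" using odd_outcome by blast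
next
  show "O_SR_is petersen_V petersen_E Out_B" by (rule pet_outcome)
next
  fix m :: nat and a :: "nat \<Rightarrow> nat"
  assume h: "m \<ge> 2 \<and> (\<forall>i\<in>{1..m}. a i \<ge> 1) \<and> (\<Sum>i=1..m. a i) \<ge> 3"
  then have m2: "2 \<le> m" and pos: "\<forall>i\<in>{1..m}. 1 \<le> a i" by auto
  show "let s = card {i \<in> {1..m}. a i = 1}; G = multipartite_V m a; EG = multipartite_E m a in
        ((s \<ge> 4 \<or> (\<exists>i\<in>{1..m}. a i \<ge> 4) \<or> (\<exists>i\<in>{1..m}. s = 3 \<and> a i = 3)
            \<or> (\<exists>i\<in>{1..m}. \<exists>j\<in>{1..m}. i \<noteq> j \<and> a i = 3 \<and> a j = 3))
           \<longrightarrow> O_SR_is G EG Out_B) \<and>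
        (((s = 3 \<and> (\<forall>i\<in>{1..m}. a i \<le> 2)) \<or>
          (s \<le> 2 \<and> (\<exists>i\<in>{1..m}. a i = 3 \<and> (\<forall>j\<in>{1..m}. j \<noteq> i \<longrightarrow> a j \<le> 2))))
           \<longrightarrow> O_SR_is G EG Out_N) \<and>
        ((\<forall>i\<in>{1..m}. max s (a i) \<le> 2) \<longrightarrow> O_SR_is G EG Out_M)"
    unfolding Let_def
    using m_caseB[OF m2 pos] m_caseN[OF m2 pos] m_caseM[OF m2 pos] by blast
qed

end
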